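(* For every positive integer $n$, the function $\Phi'$ is a bijection between well-labelled positive paths of size $n$ and marked labelled binary trees with $n$ leaves.
   Context: A well-labelled path of size $n$ is a pair $(\mathbf{p},\sigma)$ where $\mathbf{p}=p_1\ldots p_{n-1}$ is a word on $\{-1,0,+1\}$ and $\sigma=\sigma_1\ldots\sigma_n$ is a permutation of $[n]=\{1,\ldots,n\}$ such that $p_i=-1$ implies $\sigma_i<\sigma_{i+1}$ and $p_i=1$ implies $\sigma_i>\sigma_{i+1}$. It is Motzkin if $\sum_{i=1}^j p_i\ge 0$ for $j=1,\ldots,n-2$ and $\sum_{i=1}^{n-1}p_i=-1$; it is positive if $\sum_{i=1}^j p_i\ge0$ for all $j=1,\ldots,n-1$. For a set $I$ of $m$ integers, $\lambda_I$ is the order-preserving bijection from $[m]$ to $I$. A labelled binary tree of size $n$ is a rooted tree with $n$ leaves carrying distinct labels in $[n]$, each (unlabelled) internal vertex having exactly two unordered children; a marked labelled binary tree is one in which one vertex (internal or leaf) is marked. For a bijection $\lambda$ and a tree $\tau$, $\lambda(\tau)$ replaces each leaf label $i$ by $\lambda(i)$. The map $\Phi$ from well-labelled Motzkin paths of size $n\ge2$ to labelled binary trees with $n\ge 2$ leaves is defined recursively: (i) the unique Motzkin path of size 2 ($\mathbf{p}=-1$, $\sigma=12$) maps to the unique tree of size 2; (ii) if $n>2$ and $p_1=0$, set $\mathbf{p}'=p_2\ldots p_{n-1}$, $\sigma'_i=\lambda^{-1}_{[n]\setminus\{\sigma_1\}}(\sigma_{i+1})$, and $\Phi(\mathbf{p},\sigma)$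 is a root with one subtree a leaf labelled $\sigma_1$ and the other subtree $\lambda_{[n]\setminus\{\sigma_1\}}(\Phi(\mathbf{p}',\sigma'))$; (iii) if $n>2$ and $p_1=1$, let $k$ be least with $\sum_{i=1}^k p_i=0$, set $I'=\{\sigma_1,\ldots,\sigma_k\}$, $I''=\{\sigma_{k+1},\ldots,\sigma_n\}$, $p'_i=-p_{k-i}$ ($i<k$), $p''_i=p_{k+i}$ ($i<n-k$), $\sigma'_i=\lambda^{-1}_{I'}(\sigma_{k+1-i})$, $\sigma''_i=\lambda^{-1}_{I''}(\sigma_{k+i})$, and $\Phi(\mathbf{p},\sigma)$ is a root with subtrees $\lambda_{I'}(\Phi(\mathbf{p}',\sigma'))$ and $\lambda_{I''}(\Phi(\mathbf{p}'',\sigma''))$. The map $\Phi'$ on well-labelled positive paths is defined recursively: (i) the path of size 1 maps to the marked tree consisting of a single marked leaf; (ii) if $n>1$ and $p_1=0$, with $\mathbf{p}',\sigma'$ as in (ii) above, $\Phi'(\mathbf{p},\sigma)$ is an unmarked root with one subtree an unmarked leaf labelled $\sigma_1$ and the other the marked subtree $\lambda_{[n]\setminus\{\sigma_1\}}(\Phi'(\mathbf{p}',\sigma'))$; (iii) if $n>1$ and $p_1=1$, let $k\le n$ be the greatest integer such that $\sum_{i=1}^{j-1}p_i\ge1$ for all $j=2,\ldots,k-1$ and $\sum_{i=1}^{k-1}p_i=1$, and define $I',I'',\mathbf{p}',\mathbf{p}'',\sigma',\sigma''$ by the same formulas as in (iii) above. If $k=n$, $\Phi'(\mathbf{p},\sigma)$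 is the tree $\Phi(\mathbf{p}',\sigma')$ with its root marked; if $k<n$, $\Phi'(\mathbf{p},\sigma)$ is an unmarked root with the unmarked subtree $\lambda_{I'}(\Phi(\mathbf{p}',\sigma'))$ and the marked subtree $\lambda_{I''}(\Phi'(\mathbf{p}'',\sigma''))$. *)

theory Defs
  imports Main
begin

text \<open>A vertex carries a boolean flag (True = marked).
  Children of an internal vertex are unordered: trees are identified up to
  the equivalence tree_eq (swapping children at any internal vertex).\<close>

datatype ltree = Leaf bool nat | Node bool ltree ltree

inductive tree_eq :: "ltree \<Rightarrow> ltree \<Rightarrow> bool" where
  leaf: "tree_eq (Leaf m a) (Leaf m a)"
| keep: "tree_eq l l' \<Longrightarrow> tree_eq r r' \<Longrightarrow> tree_eq (Node m l r) (Node m l' r')"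
| swap: "tree_eq l l' \<Longrightarrow> tree_eq r r' \<Longrightarrow> tree_eq (Node m l r) (Node m r' l')"

definition tree_class :: "ltree \<Rightarrow> ltree set" where
  "tree_class t = {t'. tree_eq t t'}"

fun leaves :: "ltree \<Rightarrow> nat list" where
  "leaves (Leaf _ a) = [a]"
| "leaves (Node _ l r) = leaves l @ leaves r"

fun nmarks :: "ltree \<Rightarrow> nat" where
  "nmarks (Leaf m _) = (if m then 1 else 0)"
| "nmarks (Node m l r) = (if m then 1 else 0) + nmarks l + nmarks r"

fun relabel :: "(nat \<Rightarrow> nat) \<Rightarrow> ltree \<Rightarrow> ltree" where
  "relabel f (Leaf m a) = Leaf m (f a)"
| "relabel f (Node m l r) = Node m (relabel f l) (relabel f r)"

fun mark_root :: "ltree \<Rightarrow> ltree" where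
  "mark_root (Leaf _ a) = Leaf True a"
| "mark_root (Node _ l r) = Node True l r"

definition labelled_tree :: "nat \<Rightarrow> ltree \<Rightarrow> bool" where
  "labelled_tree n t \<longleftrightarrow> distinct (leaves t) \<and> set (leaves t) = {1..n}"

definition marked_labelled_tree :: "nat \<Rightarrow> ltree \<Rightarrow> bool" where
  "marked_labelled_tree n t \<longleftrightarrow> labelled_tree n t \<and> nmarks t = 1"

definition marked_trees :: "nat \<Rightarrow> ltree set set" where
  "marked_trees n = {tree_class t | t. marked_labelled_tree n t}"

text \<open>lam I i = i-th smallest element of I (1-indexed); laminv I x = rank of x in I.\<close>
definition lam :: "nat set \<Rightarrow> nat \<Rightarrow> nat" where
  "lam I i = sorted_list_of_set I ! (i - 1)"

definition laminv :: "nat set \<Rightarrow> nat \<Rightarrow> nat" where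
  "laminv I x = card {y \<in> I. y \<le> x}"

section \<open>Well-labelled paths (0-indexed lists: p!i is p_{i+1}, \<sigma>!i is \<sigma>_{i+1})\<close>

definition psum :: "int list \<Rightarrow> nat \<Rightarrow> int" where
  "psum p j = sum_list (take j p)"

definition well_labelled :: "nat \<Rightarrow> int list \<Rightarrow> nat list \<Rightarrow> bool" where
  "well_labelled n p \<sigma> \<longleftrightarrow>
     length p = n - 1 \<and> set p \<subseteq> {-1, 0, 1} \<and>
     length \<sigma> = n \<and> distinct \<sigma> \<and> set \<sigma> = {1..n} \<and>
     (\<forall>i < n - 1. (p ! i = -1 \<longrightarrow> \<sigma> ! i < \<sigma> ! (i+1)) \<and>
                   (p ! i = 1 \<longrightarrow> \<sigma> ! i > \<sigma> ! (i+1)))"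

definition positive_path :: "nat \<Rightarrow> int list \<Rightarrow> nat list \<Rightarrow> bool" where
  "positive_path n p \<sigma> \<longleftrightarrow> well_labelled n p \<sigma> \<and> (\<forall>j \<in> {1..n-1}. psum p j \<ge> 0)"

definition motzkin_path :: "nat \<Rightarrow> int list \<Rightarrow> nat list \<Rightarrow> bool" where
  "motzkin_path n p \<sigma> \<longleftrightarrow> well_labelled n p \<sigma> \<and> (\<forall>j \<in> {1..n-2}. psum p j \<ge> 0)
      \<and> psum p (n - 1) = -1"

lemma diff_less_aux: "(1::nat) \<le> k \<Longrightarrow> k < n \<Longrightarrow> n - k < n"
  by simp

text \<open>Values on inputs that are not well-labelled Motzkin/positive paths are junk.\<close>

function phi :: "int list \<Rightarrow> nat list \<Rightarrow> ltree" where
  "phi p \<sigma> = (let n = length \<sigma> in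
     if n \<le> 2 then Node False (Leaf False 1) (Leaf False 2)
     else if hd p = 0 then
       (let J = {1..n} - {hd \<sigma>} in
        Node False (Leaf False (hd \<sigma>))
          (relabel (lam J) (phi (tl p) (map (laminv J) (tl \<sigma>)))))
     else if hd p = 1 then
       (let k = (LEAST k. 1 \<le> k \<and> psum p k = 0) in
        if 1 \<le> k \<and> k < n then
          (let I1 = set (take k \<sigma>); I2 = set (drop k \<sigma>) in
           Node False
             (relabel (lam I1) (phi (map uminus (rev (take (k - 1) p))) (map (laminv I1) (rev (take k \<sigma>)))))
             (relabel (lam I2) (phi (drop k p) (map (laminv I2) (drop k \<sigma>)))))
        else Leaf False 0)
     else Leaf False 0)"
  by pat_completeness auto
termination
  by (relation "measure (\<lambda>(p, \<sigma>). length \<sigma>)") (auto simp: Let_def)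

function phi' :: "int list \<Rightarrow> nat list \<Rightarrow> ltree" where
  "phi' p \<sigma> = (let n = length \<sigma> in
     if n \<le> 1 then Leaf True (hd \<sigma>)
     else if hd p = 0 then
       (let J = {1..n} - {hd \<sigma>} in
        Node False (Leaf False (hd \<sigma>))
          (relabel (lam J) (phi' (tl p) (map (laminv J) (tl \<sigma>)))))
     else if hd p = 1 then
       (let k = (GREATEST k. k \<le> n \<and> (\<forall>j. 2 \<le> j \<and> j \<le> k - 1 \<longrightarrow> psum p (j - 1) \<ge> 1)
                           \<and> psum p (k - 1) = 1);
            I1 = set (take k \<sigma>); I2 = set (drop k \<sigma>);
            p1 = map uminus (rev (take (k - 1) p)); s1 = map (laminv I1) (rev (take k \<sigma>)) in
        if k = n then mark_root (phi p1 s1)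
        else if 1 \<le> k \<and> k < n then
          Node False (relabel (lam I1) (phi p1 s1))
             (relabel (lam I2) (phi' (drop k p) (map (laminv I2) (drop k \<sigma>))))
        else Leaf False 0)
     else Leaf False 0)"
  by pat_completeness auto
termination
  by (relation "measure (\<lambda>(p, \<sigma>). length \<sigma>)") (auto simp: Let_def simp del: One_nat_def intro: diff_less_aux)

end

theory Submission
  imports Defs
begin


fun wl :: "int list \<Rightarrow> nat list \<Rightarrow> bool" where
  "wl [] [x] = True"
| "wl (d#p) (x#y#s) = (d \<in> {-1,0,1} \<and> (d = -1 \<longrightarrow> x < y) \<and> (d = 1 \<longrightarrow> y < x) \<and> wl p (y#s))"
| "wl _ _ = False"

fun pos :: "int \<Rightarrow> int list \<Rightarrow> bool" where
  "pos h [] = True"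
| "pos h (d#p) = (0 \<le> h + d \<and> pos (h+d) p)"

definition dy :: "int list \<Rightarrow> bool" where
  "dy a \<longleftrightarrow> pos 0 a \<and> sum_list a = 0"

lemma wl_len: "wl p s \<Longrightarrow> length s = length p + 1"
  by (induction p s rule: wl.induct) auto

lemma wl_set: "wl p s \<Longrightarrow> set p \<subseteq> {-1,0,1}"
  by (induction p s rule: wl.induct) auto

lemma wl_append:
  "length s1 = length p1 + 1 \<Longrightarrow>
   wl (p1 @ d # p2) (s1 @ s2) \<longleftrightarrow> wl p1 s1 \<and> wl p2 s2 \<and> d \<in> {-1,0,1} \<and>
      (d = -1 \<longrightarrow> last s1 < hd s2) \<and> (d = 1 \<longrightarrow> hd s2 < last s1)"
proof (induction p1 arbitrary: s1)
  case Nil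
  then obtain x where s1: "s1 = [x]" by (cases s1) auto
  show ?case
  proof (cases s2)
    case Nil then show ?thesis using s1 by simp
  next
    case (Cons y s) then show ?thesis using s1 by auto
  qed
next
  case (Cons e p1)
  then obtain x y s where s1: "s1 = x # y # s" 
    by (cases s1; cases "tl s1") auto
  have "wl (p1 @ d # p2) ((y#s) @ s2) \<longleftrightarrow> wl p1 (y#s) \<and> wl p2 s2 \<and> d \<in> {-1,0,1} \<and>
      (d = -1 \<longrightarrow> last (y#s) < hd s2) \<and> (d = 1 \<longrightarrow> hd s2 < last (y#s))"
    using Cons s1 by (simp del: append_Cons)
  moreover have "last s1 = last (y#s)" using s1 by simp
  ultimately show ?case using s1 by (simp del: last.simps)
qed

lemma wl_rev: "wl p s \<Longrightarrow> wl (map uminus (rev p)) (rev s)"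
proof (induction p s rule: wl.induct)
  case (2 d p x y s)
  have l: "length (rev (y#s)) = length (map uminus (rev p)) + 1"
    using wl_len[of p "y#s"] 2 by simp
  have "wl (map uminus (rev p) @ [- d]) (rev (y#s) @ [x])"
    using wl_append[OF l, of "-d" "[]" "[x]"] 2 by auto
  then show ?case by simp
qed auto

lemma wl_mono: "strict_mono_on (set s) g \<Longrightarrow> wl p s \<Longrightarrow> wl p (map g s)"
proof (induction p s rule: wl.induct)
  case (2 d p x y s)
  have "g x < g y" if "x < y" using 2(2) that by (auto simp: strict_mono_on_def)
  moreover have "g y < g x" if "y < x" using 2(2) that by (auto simp: strict_mono_on_def)
  moreover have "strict_mono_on (set (y#s)) g" using 2(2) by (auto simp: strict_mono_on_def)
  ultimately show ?case using 2 by auto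
qed auto

lemma pos_append[simp]: "pos h (x @ y) \<longleftrightarrow> pos h x \<and> pos (h + sum_list x) y"
  by (induction x arbitrary: h) (auto simp: add.assoc)

lemma pos_mono: "pos h x \<Longrightarrow> h \<le> h' \<Longrightarrow> pos h' x"
  by (induction x arbitrary: h h') fastforce+

lemma pos_sum: "pos h x \<Longrightarrow> 0 \<le> h \<Longrightarrow> 0 \<le> h + sum_list x"
proof (induction x arbitrary: h)
  case (Cons a x)
  then have "0 \<le> (h+a) + sum_list x" by auto
  then show ?case by simp
qed simp

lemma pos_psum: "pos h x \<Longrightarrow> 0 \<le> h \<Longrightarrow> 0 \<le> h + psum x j"
proof -
  assume a: "pos h x" "0 \<le> h"
  have "pos h (take j x)" using a(1) pos_append[of h "take j x" "drop j x"] by simp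
  then show ?thesis using pos_sum a(2) by (auto simp: psum_def)
qed

lemma sum_map_uminus[simp]: "sum_list (map uminus (xs::int list)) = - sum_list xs"
  by (induction xs) auto

lemma pos_rev: "pos h a \<Longrightarrow> 0 \<le> h \<Longrightarrow> pos (h + sum_list a) (map uminus (rev a))"
proof (induction a arbitrary: h)
  case (Cons x a)
  then have "pos (h + x + sum_list a) (map uminus (rev a))" by auto
  then show ?case using Cons by (simp add: add.assoc)
qed simp

lemma dy_rev: "dy a \<Longrightarrow> dy (map uminus (rev a))"
  unfolding dy_def using pos_rev[of 0 a] by simp

lemma pos_iff: "pos h p \<longleftrightarrow> (\<forall>j \<in> {1..length p}. 0 \<le> h + psum p j)"
proof (induction p arbitrary: h)
  case Nil then show ?case by simp
next
  case (Cons x p)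
  have ps: "psum (x#p) (Suc j) = x + psum p j" for j by (simp add: psum_def)
  have "(\<forall>j \<in> {1..length (x#p)}. 0 \<le> h + psum (x#p) j) \<longleftrightarrow>
        0 \<le> h + x \<and> (\<forall>j \<in> {1..length p}. 0 \<le> h + x + psum p j)"
  proof
    assume A: "\<forall>j \<in> {1..length (x#p)}. 0 \<le> h + psum (x#p) j"
    have "0 \<le> h + psum (x#p) 1" using A by auto
    moreover have "0 \<le> h + x + psum p j" if "j \<in> {1..length p}" for j
      using A[rule_format, of "Suc j"] that ps[of j] by auto
    ultimately show "0 \<le> h + x \<and> (\<forall>j \<in> {1..length p}. 0 \<le> h + x + psum p j)"
      by (simp add: psum_def)
  next
    assume B: "0 \<le> h + x \<and> (\<forall>j \<in> {1..length p}. 0 \<le> h + x + psum p j)"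
    show "\<forall>j \<in> {1..length (x#p)}. 0 \<le> h + psum (x#p) j"
    proof
      fix j assume j: "j \<in> {1..length (x#p)}"
      then obtain i where i: "j = Suc i" by (cases j) auto
      show "0 \<le> h + psum (x#p) j"
      proof (cases i)
        case 0 then show ?thesis using B i by (simp add: psum_def)
      next
        case (Suc i') then show ?thesis using B i j ps[of i] by (auto simp: add.assoc)
      qed
    qed
  qed
  then show ?case using Cons by simp
qed

lemma first_return:
  "set r \<subseteq> {-1,0,1} \<Longrightarrow> 0 \<le> h \<Longrightarrow> \<not> pos h r \<Longrightarrow>
   \<exists>a b. r = a @ [-1] @ b \<and> pos h a \<and> h + sum_list a = 0"
proof (induction r arbitrary: h)
  case Nil then show ?case by simp
next
  case (Cons d r)
  show ?case
  proof (cases "h = 0 \<and> d = -1")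
    case True then show ?thesis by (intro exI[of _ "[]"] exI[of _ r]) auto
  next
    case False
    then have hd: "0 \<le> h + d" using Cons.prems by auto
    then have "\<not> pos (h+d) r" using Cons.prems by auto
    moreover have "set r \<subseteq> {-1,0,1}" using Cons.prems by auto
    ultimately obtain a b where "r = a @ [-1] @ b" "pos (h+d) a" "h + d + sum_list a = 0"
      using Cons.IH hd by blast
    then show ?thesis using hd by (intro exI[of _ "d#a"] exI[of _ b]) (auto simp: add.assoc)
  qed
qed

definition mot :: "int list \<Rightarrow> nat list \<Rightarrow> bool" where
  "mot p s \<longleftrightarrow> wl p s \<and> distinct s \<and> (\<exists>q. p = q @ [-1] \<and> dy q)"

definition pp :: "int list \<Rightarrow> nat list \<Rightarrow> bool" where
  "pp p s \<longleftrightarrow> wl p s \<and> distinct s \<and> pos 0 p"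

lemma mot_shape:
  assumes "set p \<subseteq> {-1,0,1}" "p = q @ [-1]" "dy q"
  shows "p = [-1] \<or> (\<exists>c. p = 0 # c @ [-1] \<and> dy c)
       \<or> (\<exists>a b. p = 1 # a @ [-1] @ b @ [-1] \<and> dy a \<and> dy b)"
proof (cases q)
  case Nil then show ?thesis using assms by simp
next
  case (Cons d q')
  have d: "d \<in> {0,1}" using assms Cons by (auto simp: dy_def)
  show ?thesis
  proof (cases "d = 0")
    case True then show ?thesis using assms Cons by (auto simp: dy_def)
  next
    case False
    then have d1: "d = 1" using d by auto
    have p1: "pos 1 q'" and s1: "sum_list q' = -1" using assms Cons d1 by (auto simp: dy_def)
    have "\<not> pos 0 q'" using pos_sum[of 0 q'] s1 by auto
    moreover have "set q' \<subseteq> {-1,0,1}" using assms Cons by auto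
    ultimately obtain a b where ab: "q' = a @ [-1] @ b" "pos 0 a" "sum_list a = 0"
      using first_return[of q' 0] by auto
    have "pos 0 b" using p1 ab by simp
    moreover have "sum_list b = 0" using s1 ab by simp
    ultimately show ?thesis using ab assms Cons d1 by (auto simp: dy_def)
  qed
qed


lemma pp_shape:
  assumes "set p \<subseteq> {-1,0,1}" "pos 0 p"
  shows "p = [] \<or> (\<exists>c. p = 0 # c \<and> pos 0 c) \<or> (\<exists>a. p = 1 # a \<and> dy a)
       \<or> (\<exists>a d w. p = 1 # a @ [d] @ w \<and> dy a \<and> d \<in> {-1,1} \<and> pos 0 w)"
proof (cases p)
  case Nil then show ?thesis by simp
next
  case (Cons e r)
  have e: "e \<in> {0,1}" using assms Cons by auto
  have rs: "set r \<subseteq> {-1,0,1}" using assms Cons by auto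
  show ?thesis
  proof (cases "e = 0")
    case True
    have "pos 0 r" using assms Cons True by simp
    then show ?thesis using Cons True by blast
  next
    case False
    then have e1: "e = 1" using e by auto
    have p1: "pos 1 r" using assms Cons e1 by auto
    show ?thesis
    proof (cases "pos 0 r")
      case False
      then obtain a w where aw: "r = a @ [-1] @ w" "pos 0 a" "sum_list a = 0"
        using first_return[of r 0] rs by auto
      have "pos 0 w" using p1 aw by simp
      moreover have "dy a" using aw by (simp add: dy_def)
      ultimately have "p = 1 # a @ [-1] @ w \<and> dy a \<and> (-1::int) \<in> {-1,1} \<and> pos 0 w"
        using aw Cons e1 by simp
      then show ?thesis by blast
    next
      case True
      define Q where "Q = (\<lambda>j. j \<le> length r \<and> sum_list (take j r) = 0)"
      have Q0: "Q 0" by (simp add: Q_def)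
      have Qb: "\<forall>y. Q y \<longrightarrow> y \<le> length r" by (simp add: Q_def)
      define j0 where "j0 = (GREATEST j. Q j)"
      have Qj0: "Q j0" unfolding j0_def by (rule GreatestI_nat[of Q 0 "length r"]) (use Q0 Qb in auto)
      have Qmax: "y \<le> j0" if "Q y" for y unfolding j0_def by (rule Greatest_le_nat[of Q y "length r"]) (use that Qb in auto)
      define a where "a = take j0 r"
      have r_eq: "r = a @ drop j0 r" by (simp add: a_def)
      have "pos 0 a" using True r_eq pos_append[of 0 a "drop j0 r"] by simp
      moreover have sa: "sum_list a = 0" using Qj0 by (simp add: Q_def a_def)
      ultimately have dya: "dy a" by (simp add: dy_def)
      show ?thesis
      proof (cases "j0 = length r")
        case True
        then have "p = 1 # a" using Cons e1 by (simp add: a_def)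
        then show ?thesis using dya by blast
      next
        case False
        then obtain d w where dw: "drop j0 r = d # w" using Qj0 Q_def
          by (cases "drop j0 r") auto
        have la: "length a = j0" using Qj0 by (simp add: a_def Q_def)
        have r2: "r = a @ d # w" using r_eq dw by simp
        have "d \<in> {-1,0,1}" using rs r2 by auto
        moreover have "d \<noteq> -1" using True r2 sa by auto
        moreover have "d \<noteq> 0"
        proof
          assume "d = 0"
          then have "Q (Suc j0)" using r2 la sa by (simp add: Q_def)
          then show False using Qmax by fastforce
        qed
        ultimately have d1: "d = 1" by auto
        have "pos 0 w"
        proof (rule ccontr)
          assume "\<not> pos 0 w"
          moreover have "set w \<subseteq> {-1,0,1}" using rs r2 by auto
          ultimately obtain a2 b2 where ab: "w = a2 @ [-1] @ b2" "sum_list a2 = 0"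
            using first_return[of w 0] by auto
          have "Q (j0 + length a2 + 2)" using r2 la sa ab d1 by (simp add: Q_def)
          then show False using Qmax by fastforce
        qed
        then have "p = 1 # a @ [d] @ w \<and> dy a \<and> d \<in> {-1,1} \<and> pos 0 w"
          using dya Cons e1 r2 d1 by simp
        then show ?thesis by blast
      qed
    qed
  qed
qed



lemma psum_Cons: "psum (x # p) (Suc i) = x + psum p i"
  by (simp add: psum_def)

lemma psum_append: "psum (x @ y) j = (if j \<le> length x then psum x j else sum_list x + psum y (j - length x))"
  by (simp add: psum_def)

lemma psum_full: "length p \<le> j \<Longrightarrow> psum p j = sum_list p"
  by (simp add: psum_def)

lemma least_k:
  assumes "dy a"
  shows "(LEAST k. 1 \<le> k \<and> psum (1 # a @ [-1] @ rest) k = 0) = length a + 2"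
proof (rule Least_equality)
  show "1 \<le> length a + 2 \<and> psum (1 # a @ [-1] @ rest) (length a + 2) = 0"
    using assms by (simp add: psum_def dy_def)
next
  fix y assume y: "1 \<le> y \<and> psum (1 # a @ [-1] @ rest) y = 0"
  show "length a + 2 \<le> y"
  proof (rule ccontr)
    assume "\<not> length a + 2 \<le> y"
    then obtain i where i: "y = Suc i" "i \<le> length a" using y by (cases y) auto
    have "psum (1 # a @ [-1] @ rest) y = 1 + psum a i"
      using i by (simp add: psum_Cons psum_append)
    moreover have "0 \<le> psum a i" using pos_psum[of 0 a i] assms by (simp add: dy_def)
    ultimately show False using y by simp
  qed
qed

definition Pk :: "int list \<Rightarrow> nat \<Rightarrow> nat \<Rightarrow> bool" where
  "Pk p n k \<longleftrightarrow> k \<le> n \<and> (\<forall>j. 2 \<le> j \<and> j \<le> k - 1 \<longrightarrow> psum p (j - 1) \<ge> 1) \<and> psum p (k - 1) = 1"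

lemma Pk_k0:
  assumes "dy a" "length a + 2 \<le> n"
  shows "Pk (1 # a @ rest) n (length a + 2)"
  unfolding Pk_def
proof (intro conjI allI impI)
  show "length a + 2 \<le> n" by fact
  show "psum (1 # a @ rest) (length a + 2 - 1) = 1"
    using assms by (simp add: psum_def dy_def)
  fix j assume j: "2 \<le> j \<and> j \<le> length a + 2 - 1"
  then obtain i where i: "j - 1 = Suc i" "i \<le> length a" by (cases "j - 1") auto
  have "psum (1 # a @ rest) (j - 1) = 1 + psum a i"
    using i by (simp add: psum_Cons psum_append)
  moreover have "0 \<le> psum a i" using pos_psum[of 0 a i] assms by (simp add: dy_def)
  ultimately show "1 \<le> psum (1 # a @ rest) (j - 1)" by simp
qed

lemma greatest_A:
  assumes "dy a"
  shows "(GREATEST k. Pk (1 # a) (length a + 2) k) = length a + 2"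
  using Pk_k0[OF assms, of "length a + 2" "[]"]
  by (intro Greatest_equality) (auto simp: Pk_def)

lemma greatest_BC:
  assumes "dy a" "d \<in> {-1,1}" "pos 0 w"
  shows "(GREATEST k. Pk (1 # a @ [d] @ w) (length a + length w + 3) k) = length a + 2"
proof (rule Greatest_equality)
  show "Pk (1 # a @ [d] @ w) (length a + length w + 3) (length a + 2)"
    using Pk_k0[OF assms(1), of "length a + length w + 3" "[d] @ w"] by simp
next
  fix y assume y: "Pk (1 # a @ [d] @ w) (length a + length w + 3) y"
  show "y \<le> length a + 2"
  proof (rule ccontr)
    assume gt: "\<not> y \<le> length a + 2"
    have sa: "sum_list a = 0" using assms by (simp add: dy_def)
    show False
    proof (cases "d = -1")
      case True
      have ps: "psum (1 # a @ [d] @ w) (length a + 2) = 0"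
        using sa True by (simp add: psum_def)
      show False
      proof (cases "y = length a + 3")
        case True
        then show False using y ps unfolding Pk_def by simp
      next
        case False
        then have "2 \<le> length a + 3 \<and> length a + 3 \<le> y - 1" using gt by simp
        then have "1 \<le> psum (1 # a @ [d] @ w) (length a + 3 - 1)"
          using y unfolding Pk_def by blast
        then show False using ps by simp
      qed
    next
      case False
      then have d1: "d = 1" using assms by auto
      obtain i where i: "y - 1 = length a + 2 + i" using gt by (intro that[of "y - 1 - (length a + 2)"]) simp
      have "psum (1 # a @ [d] @ w) (y - 1) = 2 + psum w i"
        using i sa d1 by (simp add: psum_def)
      moreover have "0 \<le> psum w i" using pos_psum[of 0 w i] assms by simp
      ultimately show False using y unfolding Pk_def by simp
    qed
  qed
qed


function psi :: "int list \<Rightarrow> nat list \<Rightarrow> ltree" where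
  "psi p \<sigma> = (let n = length \<sigma> in
     if n \<le> 2 then Node False (Leaf False (min (\<sigma>!0) (\<sigma>!1))) (Leaf False (max (\<sigma>!0) (\<sigma>!1)))
     else if hd p = 0 then Node False (Leaf False (hd \<sigma>)) (psi (tl p) (tl \<sigma>))
     else if hd p = 1 then
       (let k = (LEAST k. 1 \<le> k \<and> psum p k = 0) in
        if 1 \<le> k \<and> k < n then
          Node False (psi (map uminus (rev (take (k - 1) p))) (rev (take k \<sigma>))) (psi (drop k p) (drop k \<sigma>))
        else Leaf False 0)
     else Leaf False 0)"
  by pat_completeness auto
termination
  by (relation "measure (\<lambda>(p, \<sigma>). length \<sigma>)") (auto simp: Let_def)

function psi' :: "int list \<Rightarrow> nat list \<Rightarrow> ltree" where
  "psi' p \<sigma> = (let n = length \<sigma> in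
     if n \<le> 1 then Leaf True (hd \<sigma>)
     else if hd p = 0 then Node False (Leaf False (hd \<sigma>)) (psi' (tl p) (tl \<sigma>))
     else if hd p = 1 then
       (let k = (GREATEST k. Pk p n k);
            p1 = map uminus (rev (take (k - 1) p)); s1 = rev (take k \<sigma>) in
        if k = n then mark_root (psi p1 s1)
        else if 1 \<le> k \<and> k < n then
          Node False (psi p1 s1) (psi' (drop k p) (drop k \<sigma>))
        else Leaf False 0)
     else Leaf False 0)"
  by pat_completeness auto
termination
  by (relation "measure (\<lambda>(p, \<sigma>). length \<sigma>)") (auto simp: Let_def simp del: One_nat_def intro: diff_less_aux)

declare psi.simps[simp del] psi'.simps[simp del]

lemma psi_gen1: "2 < length \<sigma> \<Longrightarrow> hd p = 1 \<Longrightarrow> (LEAST k. 1 \<le> k \<and> psum p k = 0) = K \<Longrightarrow> 1 \<le> K \<Longrightarrow> K < length \<sigma> \<Longrightarrow>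
  psi p \<sigma> = Node False (psi (map uminus (rev (take (K - 1) p))) (rev (take K \<sigma>))) (psi (drop K p) (drop K \<sigma>))"
  by (subst psi.simps) (simp add: Let_def)

lemma psi_U0: "psi [-1] [x,y] = Node False (Leaf False (min x y)) (Leaf False (max x y))"
  by (subst psi.simps) simp

lemma psi_U1: "length \<sigma> = length c + 3 \<Longrightarrow>
  psi (0 # c @ [-1]) \<sigma> = Node False (Leaf False (hd \<sigma>)) (psi (c @ [-1]) (tl \<sigma>))"
  by (subst psi.simps) (simp add: Let_def)

lemma psi_U2:
  assumes "dy a" "length \<sigma> = length a + length b + 4"
  shows "psi (1 # a @ [-1] @ b @ [-1]) \<sigma> =
    Node False (psi (map uminus (rev a) @ [-1]) (rev (take (length a + 2) \<sigma>)))
               (psi (b @ [-1]) (drop (length a + 2) \<sigma>))"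
proof -
  have k: "(LEAST k. 1 \<le> k \<and> psum (1 # a @ [-1] @ b @ [-1]) k = 0) = length a + 2"
    using least_k[OF assms(1)] by blast
  show ?thesis using psi_gen1[OF _ _ k] assms(2) by simp
qed

lemma psi'_V0: "psi' p [x] = Leaf True x"
  by (subst psi'.simps) simp

lemma psi'_V1: "length \<sigma> = length c + 2 \<Longrightarrow>
  psi' (0 # c) \<sigma> = Node False (Leaf False (hd \<sigma>)) (psi' c (tl \<sigma>))"
  by (subst psi'.simps) (simp add: Let_def)

lemma psi'_gen2: "1 < length \<sigma> \<Longrightarrow> hd p = 1 \<Longrightarrow> (GREATEST k. Pk p (length \<sigma>) k) = length \<sigma> \<Longrightarrow>
  psi' p \<sigma> = mark_root (psi (map uminus (rev (take (length \<sigma> - 1) p))) (rev \<sigma>))"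
  by (subst psi'.simps) (simp add: Let_def)

lemma psi'_gen3: "1 < length \<sigma> \<Longrightarrow> hd p = 1 \<Longrightarrow> (GREATEST k. Pk p (length \<sigma>) k) = K \<Longrightarrow> 1 \<le> K \<Longrightarrow> K < length \<sigma> \<Longrightarrow>
  psi' p \<sigma> = Node False (psi (map uminus (rev (take (K - 1) p))) (rev (take K \<sigma>))) (psi' (drop K p) (drop K \<sigma>))"
  by (subst psi'.simps) (simp add: Let_def)

lemma psi'_V2:
  assumes "dy a" "length \<sigma> = length a + 2"
  shows "psi' (1 # a) \<sigma> = mark_root (psi (map uminus (rev a) @ [-1]) (rev \<sigma>))"
proof -
  have k: "(GREATEST k. Pk (1 # a) (length \<sigma>) k) = length \<sigma>"
    using greatest_A[OF assms(1)] assms(2) by simp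
  show ?thesis using psi'_gen2[OF _ _ k] assms(2) by simp
qed

lemma psi'_V3:
  assumes "dy a" "d \<in> {-1,1}" "pos 0 w" "length \<sigma> = length a + length w + 3"
  shows "psi' (1 # a @ [d] @ w) \<sigma> =
    Node False (psi (map uminus (rev a) @ [-1]) (rev (take (length a + 2) \<sigma>)))
               (psi' w (drop (length a + 2) \<sigma>))"
proof -
  have k: "(GREATEST k. Pk (1 # a @ [d] @ w) (length \<sigma>) k) = length a + 2"
    using greatest_BC[OF assms(1-3)] assms(4) by simp
  show ?thesis using psi'_gen3[OF _ _ k] assms(4) by simp
qed


lemma te_refl: "tree_eq t t"
  by (induction t) (auto intro: tree_eq.intros)

lemma te_sym: "tree_eq t t' \<Longrightarrow> tree_eq t' t"
  by (induction rule: tree_eq.induct) (auto intro: tree_eq.intros)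

lemma te_leaf: "tree_eq (Leaf m a) t \<longleftrightarrow> t = Leaf m a"
  by (auto elim: tree_eq.cases intro: tree_eq.intros)

lemma te_node: "tree_eq (Node m l r) t \<longleftrightarrow>
  (\<exists>l' r'. t = Node m l' r' \<and> ((tree_eq l l' \<and> tree_eq r r') \<or> (tree_eq l r' \<and> tree_eq r l')))"
  by (auto elim: tree_eq.cases intro: tree_eq.intros)

lemma te_trans: "tree_eq a b \<Longrightarrow> tree_eq b c \<Longrightarrow> tree_eq a c"
proof (induction a b arbitrary: c rule: tree_eq.induct)
  case (leaf m a) then show ?case by simp
next
  case (keep l l' r r' m)
  from keep.prems obtain x y where c: "c = Node m x y"
    "(tree_eq l' x \<and> tree_eq r' y) \<or> (tree_eq l' y \<and> tree_eq r' x)" by (auto simp: te_node)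
  then show ?case using keep.IH by (auto intro: tree_eq.intros)
next
  case (swap l l' r r' m)
  from swap.prems obtain x y where c: "c = Node m x y"
    "(tree_eq r' x \<and> tree_eq l' y) \<or> (tree_eq r' y \<and> tree_eq l' x)" by (auto simp: te_node)
  then show ?case using swap.IH by (auto intro: tree_eq.intros)
qed

lemma te_nmarks: "tree_eq t t' \<Longrightarrow> nmarks t' = nmarks t"
  by (induction rule: tree_eq.induct) auto

lemma te_leaves: "tree_eq t t' \<Longrightarrow> set (leaves t') = set (leaves t) \<and> length (leaves t') = length (leaves t)"
  by (induction rule: tree_eq.induct) auto

lemma te_swap: "tree_eq (Node m l r) (Node m r l)"
  by (rule tree_eq.swap) (rule te_refl)+

lemma te_remark: "tree_eq (Node m l r) (Node m' l' r') \<Longrightarrow> tree_eq (Node m2 l r) (Node m2 l' r')"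
  by (auto simp: te_node intro: tree_eq.intros)

lemma tree_class_eq: "tree_eq a b \<Longrightarrow> tree_class a = tree_class b"
  unfolding tree_class_def using te_sym te_trans by blast

fun isLeaf :: "ltree \<Rightarrow> bool" where
  "isLeaf (Leaf _ _) = True" | "isLeaf (Node _ _ _) = False"

fun lab :: "ltree \<Rightarrow> nat" where
  "lab (Leaf _ a) = a" | "lab (Node _ _ _) = 0"

fun fl :: "ltree \<Rightarrow> nat \<times> nat" where
  "fl (Leaf m a) = (a, a)"
| "fl (Node m l r) = (if isLeaf l \<and> isLeaf r then (min (lab l) (lab r), max (lab l) (lab r))
     else if isLeaf l then (lab l, snd (fl r))
     else if isLeaf r then (lab r, snd (fl l))
     else if fst (fl l) < fst (fl r) then (snd (fl l), snd (fl r)) else (snd (fl r), snd (fl l)))"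

lemma fl_in: "fst (fl t) \<in> set (leaves t) \<and> snd (fl t) \<in> set (leaves t)"
proof (induction t)
  case (Leaf m a) then show ?case by simp
next
  case (Node m l r)
  have ll: "isLeaf t \<Longrightarrow> lab t \<in> set (leaves t)" for t by (cases t) auto
  show ?case using Node ll[of l] ll[of r] by (auto simp: min_def max_def)
qed

lemma te_isLeaf: "tree_eq t t' \<Longrightarrow> isLeaf t' = isLeaf t"
  by (induction rule: tree_eq.induct) auto

lemma te_lab: "tree_eq t t' \<Longrightarrow> isLeaf t \<Longrightarrow> lab t' = lab t"
  by (induction rule: tree_eq.induct) auto

lemma te_fl: "tree_eq t t' \<Longrightarrow> distinct (leaves t) \<Longrightarrow> fl t' = fl t"
proof (induction rule: tree_eq.induct)
  case (leaf m a) then show ?case by simp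
next
  case (keep l l' r r' m)
  then show ?case using te_isLeaf[OF keep.hyps(1)] te_isLeaf[OF keep.hyps(2)]
      te_lab[OF keep.hyps(1)] te_lab[OF keep.hyps(2)] by auto
next
  case (swap l l' r r' m)
  have fl: "fl l' = fl l" "fl r' = fl r" using swap by auto
  have dj: "set (leaves l) \<inter> set (leaves r) = {}" using swap.prems by simp
  have ne: "\<not> isLeaf l \<Longrightarrow> \<not> isLeaf r \<Longrightarrow> fst (fl l) \<noteq> fst (fl r)"
    using fl_in[of l] fl_in[of r] dj by auto
  show ?case using te_isLeaf[OF swap.hyps(1)] te_isLeaf[OF swap.hyps(2)]
      te_lab[OF swap.hyps(1)] te_lab[OF swap.hyps(2)] fl ne
    by (auto simp: min_def max_def)
qed

lemma mot_cases:
  assumes "mot p \<sigma>"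
  shows "(p = [-1] \<and> (\<exists>x y. \<sigma> = [x,y] \<and> x < y)) \<or>
    (\<exists>c. p = 0 # c @ [-1] \<and> dy c \<and> length \<sigma> = length c + 3 \<and> mot (c @ [-1]) (tl \<sigma>)
        \<and> hd \<sigma> \<notin> set (tl \<sigma>) \<and> \<sigma> = hd \<sigma> # tl \<sigma>) \<or>
    (\<exists>a b. p = 1 # a @ [-1] @ b @ [-1] \<and> dy a \<and> dy b \<and> length \<sigma> = length a + length b + 4
        \<and> mot (map uminus (rev a) @ [-1]) (rev (take (length a + 2) \<sigma>))
        \<and> mot (b @ [-1]) (drop (length a + 2) \<sigma>)
        \<and> last (take (length a + 2) \<sigma>) < hd (drop (length a + 2) \<sigma>))"
proof -
  from assms obtain q where w: "wl p \<sigma>" and ds: "distinct \<sigma>" and q: "p = q @ [-1]" "dy q"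
    by (auto simp: mot_def)
  have len: "length \<sigma> = length p + 1" using wl_len[OF w] .
  have sp: "set p \<subseteq> {-1,0,1}" using wl_set[OF w] .
  from mot_shape[OF sp q]
  consider "p = [-1]" | c where "p = 0 # c @ [-1]" "dy c"
    | a b where "p = 1 # a @ [-1] @ b @ [-1]" "dy a" "dy b" by blast
  then show ?thesis
  proof cases
    case 1
    then obtain x y where "\<sigma> = [x,y]" using len
      by (cases \<sigma>; cases "tl \<sigma>"; cases "tl (tl \<sigma>)") auto
    then show ?thesis using 1 w by auto
  next
    case (2 c)
    obtain x y s where s: "\<sigma> = x # y # s" using len 2
      by (cases \<sigma>; cases "tl \<sigma>") auto
    have "wl (c @ [-1]) (y # s)" using w 2 s by simp
    moreover have "\<exists>q. c @ [-1] = q @ [-1] \<and> dy q" using 2 by blast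
    ultimately have "mot (c @ [-1]) (tl \<sigma>)" using ds s by (simp add: mot_def)
    then show ?thesis using 2 len ds s by auto
  next
    case (3 a b)
    define k where "k = length a + 2"
    have lk: "length (take k \<sigma>) = length (1 # a) + 1" using len 3 by (simp add: k_def)
    have A: "wl ((1 # a) @ (-1) # (b @ [-1])) (take k \<sigma> @ drop k \<sigma>)" using w 3 by simp
    have W: "wl (1 # a) (take k \<sigma>)" "wl (b @ [-1]) (drop k \<sigma>)"
      "last (take k \<sigma>) < hd (drop k \<sigma>)"
      using iffD1[OF wl_append[OF lk, of "-1" "b @ [-1]" "drop k \<sigma>"] A] by auto
    have "wl (map uminus (rev (1 # a))) (rev (take k \<sigma>))" using wl_rev[OF W(1)] .
    then have "wl (map uminus (rev a) @ [-1]) (rev (take k \<sigma>))" by simp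
    moreover have "dy (map uminus (rev a))" using dy_rev 3 by blast
    moreover have "distinct (rev (take k \<sigma>))" "distinct (drop k \<sigma>)" using ds by auto
    ultimately have M: "mot (map uminus (rev a) @ [-1]) (rev (take k \<sigma>))"
      "mot (b @ [-1]) (drop k \<sigma>)" using W(2) 3 by (auto simp: mot_def)
    show ?thesis using 3 M W(3) len unfolding k_def by auto
  qed
qed

lemma pp_cases:
  assumes "pp p \<sigma>"
  shows "(p = [] \<and> (\<exists>x. \<sigma> = [x])) \<or>
    (\<exists>c. p = 0 # c \<and> length \<sigma> = length c + 2 \<and> pp c (tl \<sigma>)
        \<and> hd \<sigma> \<notin> set (tl \<sigma>) \<and> \<sigma> = hd \<sigma> # tl \<sigma>) \<or>
    (\<exists>a. p = 1 # a \<and> dy a \<and> length \<sigma> = length a + 2 \<and> mot (map uminus (rev a) @ [-1]) (rev \<sigma>)) \<or>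
    (\<exists>a d w. p = 1 # a @ [d] @ w \<and> dy a \<and> d \<in> {-1,1} \<and> pos 0 w
        \<and> length \<sigma> = length a + length w + 3
        \<and> mot (map uminus (rev a) @ [-1]) (rev (take (length a + 2) \<sigma>))
        \<and> pp w (drop (length a + 2) \<sigma>)
        \<and> (d = -1 \<longleftrightarrow> last (take (length a + 2) \<sigma>) < hd (drop (length a + 2) \<sigma>)))"
proof -
  from assms have w: "wl p \<sigma>" and ds: "distinct \<sigma>" and ps: "pos 0 p"
    by (auto simp: pp_def)
  have len: "length \<sigma> = length p + 1" using wl_len[OF w] .
  have sp: "set p \<subseteq> {-1,0,1}" using wl_set[OF w] .
  from pp_shape[OF sp ps]
  consider "p = []" | c where "p = 0 # c" "pos 0 c" | a where "p = 1 # a" "dy a"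
    | a d w' where "p = 1 # a @ [d] @ w'" "dy a" "d \<in> {-1,1}" "pos 0 w'" by blast
  then show ?thesis
  proof cases
    case 1
    then obtain x where "\<sigma> = [x]" using len by (cases \<sigma>) auto
    then show ?thesis using 1 by auto
  next
    case (2 c)
    obtain x y s where s: "\<sigma> = x # y # s" using len 2
      by (cases \<sigma>; cases "tl \<sigma>") auto
    have "wl c (y # s)" using w 2 s by simp
    then have "pp c (tl \<sigma>)" using ds s 2 by (simp add: pp_def)
    then show ?thesis using 2 len ds s by auto
  next
    case (3 a)
    have "wl (map uminus (rev (1 # a))) (rev \<sigma>)" using wl_rev w 3 by blast
    then have "wl (map uminus (rev a) @ [-1]) (rev \<sigma>)" by simp
    moreover have "dy (map uminus (rev a))" using dy_rev 3 by blast
    ultimately have "mot (map uminus (rev a) @ [-1]) (rev \<sigma>)" using ds by (auto simp: mot_def)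
    then show ?thesis using 3 len by auto
  next
    case (4 a d w')
    define k where "k = length a + 2"
    have lk: "length (take k \<sigma>) = length (1 # a) + 1" using len 4 by (simp add: k_def)
    have A: "wl ((1 # a) @ d # w') (take k \<sigma> @ drop k \<sigma>)" using w 4 by simp
    have W: "wl (1 # a) (take k \<sigma>)" "wl w' (drop k \<sigma>)"
      "d = -1 \<longrightarrow> last (take k \<sigma>) < hd (drop k \<sigma>)" "d = 1 \<longrightarrow> hd (drop k \<sigma>) < last (take k \<sigma>)"
      using iffD1[OF wl_append[OF lk, of d w' "drop k \<sigma>"] A] by auto
    have "wl (map uminus (rev (1 # a))) (rev (take k \<sigma>))" using wl_rev[OF W(1)] .
    then have "wl (map uminus (rev a) @ [-1]) (rev (take k \<sigma>))" by simp
    moreover have "dy (map uminus (rev a))" using dy_rev 4 by blast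
    moreover have "distinct (rev (take k \<sigma>))" "distinct (drop k \<sigma>)" using ds by auto
    ultimately have M: "mot (map uminus (rev a) @ [-1]) (rev (take k \<sigma>))"
      "pp w' (drop k \<sigma>)" using W(2) 4 by (auto simp: mot_def pp_def)
    have "d = -1 \<longleftrightarrow> last (take k \<sigma>) < hd (drop k \<sigma>)" using W(3,4) 4(3) by auto
    then show ?thesis using 4 M len unfolding k_def by auto
  qed
qed


lemma distinct_of_set_len: "distinct s \<Longrightarrow> set l = set s \<Longrightarrow> length l = length s \<Longrightarrow> distinct l"
  by (metis card_distinct distinct_card)

lemma psi_props:
  "mot p \<sigma> \<Longrightarrow> nmarks (psi p \<sigma>) = 0 \<and> set (leaves (psi p \<sigma>)) = set \<sigma> \<and>
     length (leaves (psi p \<sigma>)) = length \<sigma> \<and> \<not> isLeaf (psi p \<sigma>) \<and> fl (psi p \<sigma>) = (hd \<sigma>, last \<sigma>)"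
proof (induction "length \<sigma>" arbitrary: p \<sigma> rule: less_induct)
  case less
  from mot_cases[OF less.prems] show ?case
  proof (elim disjE exE conjE)
    fix x y assume "p = [-1]" "\<sigma> = [x,y]" "x < y"
    then show ?thesis by (simp add: psi_U0)
  next
    fix c assume c: "p = 0 # c @ [-1]" "dy c" "length \<sigma> = length c + 3" "mot (c @ [-1]) (tl \<sigma>)"
      "hd \<sigma> \<notin> set (tl \<sigma>)" "\<sigma> = hd \<sigma> # tl \<sigma>"
    have IH: "nmarks (psi (c @ [-1]) (tl \<sigma>)) = 0 \<and> set (leaves (psi (c @ [-1]) (tl \<sigma>))) = set (tl \<sigma>) \<and>
     length (leaves (psi (c @ [-1]) (tl \<sigma>))) = length (tl \<sigma>) \<and> \<not> isLeaf (psi (c @ [-1]) (tl \<sigma>)) \<and>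
     fl (psi (c @ [-1]) (tl \<sigma>)) = (hd (tl \<sigma>), last (tl \<sigma>))"
      using less.hyps[OF _ c(4)] c(3) by simp
    have ne: "tl \<sigma> \<noteq> []" using c(3) by (cases \<sigma>) auto
    have "last \<sigma> = last (tl \<sigma>)" using ne c(6) by (metis last_ConsR)
    moreover have "set \<sigma> = insert (hd \<sigma>) (set (tl \<sigma>))" using c(6) by (metis list.simps(15))
    moreover have "length \<sigma> = Suc (length (tl \<sigma>))" using c(3) by simp
    ultimately show ?thesis using IH c(1,3) by (simp add: psi_U1)
  next
    fix a b assume ab: "p = 1 # a @ [-1] @ b @ [-1]" "dy a" "dy b" "length \<sigma> = length a + length b + 4"
      "mot (map uminus (rev a) @ [-1]) (rev (take (length a + 2) \<sigma>))"
      "mot (b @ [-1]) (drop (length a + 2) \<sigma>)"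
      "last (take (length a + 2) \<sigma>) < hd (drop (length a + 2) \<sigma>)"
    define k where "k = length a + 2"
    define A where "A = psi (map uminus (rev a) @ [-1]) (rev (take k \<sigma>))"
    define B where "B = psi (b @ [-1]) (drop k \<sigma>)"
    have t: "psi p \<sigma> = Node False A B" using psi_U2[OF ab(2,4)] ab(1) by (simp add: A_def B_def k_def)
    have IA: "nmarks A = 0 \<and> set (leaves A) = set (take k \<sigma>) \<and> length (leaves A) = k \<and> \<not> isLeaf A
      \<and> fl A = (last (take k \<sigma>), hd \<sigma>)"
      using less.hyps[OF _ ab(5)] ab(4) by (simp add: A_def k_def hd_rev last_rev hd_take)
    have IB: "nmarks B = 0 \<and> set (leaves B) = set (drop k \<sigma>) \<and> length (leaves B) = length \<sigma> - k \<and> \<not> isLeaf B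
      \<and> fl B = (hd (drop k \<sigma>), last \<sigma>)"
      using less.hyps[OF _ ab(6)] ab(4) by (simp add: B_def k_def last_drop)
    have "set \<sigma> = set (take k \<sigma>) \<union> set (drop k \<sigma>)"
      by (metis append_take_drop_id set_append)
    then show ?thesis using t IA IB ab(4,7) by (simp add: k_def)
  qed
qed

lemma psi_distinct: "mot p \<sigma> \<Longrightarrow> distinct (leaves (psi p \<sigma>))"
  using psi_props[of p \<sigma>] distinct_of_set_len[of \<sigma>] by (auto simp: mot_def)

lemma te_leafcount: "tree_eq (Node m X Y) (Node m' X' Y') \<Longrightarrow>
  (isLeaf X' \<and> isLeaf Y' \<longleftrightarrow> isLeaf X \<and> isLeaf Y) \<and> (isLeaf X' \<or> isLeaf Y' \<longleftrightarrow> isLeaf X \<or> isLeaf Y)"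
  by (auto simp: te_node dest: te_isLeaf)

lemma psi_inj:
  "mot p \<sigma> \<Longrightarrow> mot q \<tau> \<Longrightarrow> tree_eq (psi p \<sigma>) (psi q \<tau>) \<Longrightarrow> p = q \<and> \<sigma> = \<tau>"
proof (induction "length \<sigma>" arbitrary: p \<sigma> q \<tau> rule: less_induct)
  case less
  have fleq: "fl (psi q \<tau>) = fl (psi p \<sigma>)" using te_fl[OF less.prems(3) psi_distinct[OF less.prems(1)]] .
  then have hl: "hd \<tau> = hd \<sigma>" "last \<tau> = last \<sigma>" using psi_props[OF less.prems(1)] psi_props[OF less.prems(2)] by auto
  from mot_cases[OF less.prems(1)] show ?case
  proof (elim disjE exE conjE)
    fix x y assume s: "p = [-1]" "\<sigma> = [x,y]" "x < y"
    then have tp: "psi p \<sigma> = Node False (Leaf False x) (Leaf False y)" by (simp add: psi_U0)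
    from mot_cases[OF less.prems(2)] show ?thesis
    proof (elim disjE exE conjE)
      fix x' y' assume "q = [-1]" "\<tau> = [x',y']" "x' < y'"
      then show ?thesis using s hl by simp
    next
      fix c assume c: "q = 0 # c @ [-1]" "length \<tau> = length c + 3" "mot (c @ [-1]) (tl \<tau>)"
      then have "psi q \<tau> = Node False (Leaf False (hd \<tau>)) (psi (c @ [-1]) (tl \<tau>))" by (simp add: psi_U1)
      then show ?thesis using less.prems(3) tp te_leafcount psi_props[OF c(3)] by fastforce
    next
      fix a b assume ab: "q = 1 # a @ [-1] @ b @ [-1]" "dy a" "length \<tau> = length a + length b + 4"
        "mot (map uminus (rev a) @ [-1]) (rev (take (length a + 2) \<tau>))"
        "mot (b @ [-1]) (drop (length a + 2) \<tau>)"
      then have "psi q \<tau> = Node False (psi (map uminus (rev a) @ [-1]) (rev (take (length a + 2) \<tau>)))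
               (psi (b @ [-1]) (drop (length a + 2) \<tau>))" using psi_U2[OF ab(2,3)] ab(1) by simp
      then show ?thesis using less.prems(3) tp te_leafcount psi_props[OF ab(4)] by fastforce
    qed
  next
    fix c assume c: "p = 0 # c @ [-1]" "length \<sigma> = length c + 3" "mot (c @ [-1]) (tl \<sigma>)"
      "\<sigma> = hd \<sigma> # tl \<sigma>"
    then have tp: "psi p \<sigma> = Node False (Leaf False (hd \<sigma>)) (psi (c @ [-1]) (tl \<sigma>))" by (simp add: psi_U1)
    from mot_cases[OF less.prems(2)] show ?thesis
    proof (elim disjE exE conjE)
      fix x' y' assume "q = [-1]" "\<tau> = [x',y']" "x' < y'"
      then have "psi q \<tau> = Node False (Leaf False x') (Leaf False y')" by (simp add: psi_U0)
      then show ?thesis using less.prems(3) tp te_leafcount psi_props[OF c(3)] by fastforce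
    next
      fix c' assume c': "q = 0 # c' @ [-1]" "length \<tau> = length c' + 3" "mot (c' @ [-1]) (tl \<tau>)"
        "\<tau> = hd \<tau> # tl \<tau>"
      then have tq: "psi q \<tau> = Node False (Leaf False (hd \<tau>)) (psi (c' @ [-1]) (tl \<tau>))" by (simp add: psi_U1)
      have "tree_eq (psi (c @ [-1]) (tl \<sigma>)) (psi (c' @ [-1]) (tl \<tau>))"
        using less.prems(3) tp tq psi_props[OF c(3)] psi_props[OF c'(3)]
        by (auto simp: te_node te_leaf dest: te_isLeaf)
      then have "c @ [-1] = c' @ [-1] \<and> tl \<sigma> = tl \<tau>" using less.hyps[OF _ c(3) c'(3)] c(2) by simp
      then show ?thesis using c(1,4) c'(1,4) hl by (metis butlast_snoc)
    next
      fix a b assume ab: "q = 1 # a @ [-1] @ b @ [-1]" "dy a" "length \<tau> = length a + length b + 4"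
        "mot (map uminus (rev a) @ [-1]) (rev (take (length a + 2) \<tau>))"
        "mot (b @ [-1]) (drop (length a + 2) \<tau>)"
      then have "psi q \<tau> = Node False (psi (map uminus (rev a) @ [-1]) (rev (take (length a + 2) \<tau>)))
               (psi (b @ [-1]) (drop (length a + 2) \<tau>))" using psi_U2[OF ab(2,3)] ab(1) by simp
      then show ?thesis using less.prems(3) tp te_leafcount psi_props[OF ab(4)] psi_props[OF ab(5)]
        psi_props[OF c(3)] by fastforce
    qed
  next
    fix a b assume ab: "p = 1 # a @ [-1] @ b @ [-1]" "dy a" "length \<sigma> = length a + length b + 4"
      "mot (map uminus (rev a) @ [-1]) (rev (take (length a + 2) \<sigma>))"
      "mot (b @ [-1]) (drop (length a + 2) \<sigma>)"
      "last (take (length a + 2) \<sigma>) < hd (drop (length a + 2) \<sigma>)"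
    define A where "A = psi (map uminus (rev a) @ [-1]) (rev (take (length a + 2) \<sigma>))"
    define B where "B = psi (b @ [-1]) (drop (length a + 2) \<sigma>)"
    have tp: "psi p \<sigma> = Node False A B" using psi_U2[OF ab(2,3)] ab(1) by (simp add: A_def B_def)
    have flA: "fst (fl A) = last (take (length a + 2) \<sigma>)" using psi_props[OF ab(4)] ab(3)
      by (simp add: A_def hd_rev)
    have flB: "fst (fl B) = hd (drop (length a + 2) \<sigma>)" using psi_props[OF ab(5)] by (simp add: B_def)
    from mot_cases[OF less.prems(2)] show ?thesis
    proof (elim disjE exE conjE)
      fix x' y' assume "q = [-1]" "\<tau> = [x',y']" "x' < y'"
      then have "psi q \<tau> = Node False (Leaf False x') (Leaf False y')" by (simp add: psi_U0)
      then show ?thesis using less.prems(3) tp te_leafcount psi_props[OF ab(4)] by (fastforce simp: A_def)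
    next
      fix c' assume c': "q = 0 # c' @ [-1]" "length \<tau> = length c' + 3" "mot (c' @ [-1]) (tl \<tau>)"
      then have tq: "psi q \<tau> = Node False (Leaf False (hd \<tau>)) (psi (c' @ [-1]) (tl \<tau>))" by (simp add: psi_U1)
      then show ?thesis using less.prems(3) tp te_leafcount psi_props[OF ab(4)] psi_props[OF ab(5)]
        psi_props[OF c'(3)] by (fastforce simp: A_def B_def)
    next
      fix a' b' assume ab': "q = 1 # a' @ [-1] @ b' @ [-1]" "dy a'" "length \<tau> = length a' + length b' + 4"
        "mot (map uminus (rev a') @ [-1]) (rev (take (length a' + 2) \<tau>))"
        "mot (b' @ [-1]) (drop (length a' + 2) \<tau>)"
        "last (take (length a' + 2) \<tau>) < hd (drop (length a' + 2) \<tau>)"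
      define A' where "A' = psi (map uminus (rev a') @ [-1]) (rev (take (length a' + 2) \<tau>))"
      define B' where "B' = psi (b' @ [-1]) (drop (length a' + 2) \<tau>)"
      have tq: "psi q \<tau> = Node False A' B'" using psi_U2[OF ab'(2,3)] ab'(1) by (simp add: A'_def B'_def)
      have flA': "fst (fl A') = last (take (length a' + 2) \<tau>)" using psi_props[OF ab'(4)] ab'(3)
        by (simp add: A'_def hd_rev)
      have flB': "fst (fl B') = hd (drop (length a' + 2) \<tau>)" using psi_props[OF ab'(5)] by (simp add: B'_def)
      have dA: "distinct (leaves A)" using psi_distinct[OF ab(4)] by (simp add: A_def)
      have dB: "distinct (leaves B)" using psi_distinct[OF ab(5)] by (simp add: B_def)
      have "(tree_eq A A' \<and> tree_eq B B') \<or> (tree_eq A B' \<and> tree_eq B A')"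
        using less.prems(3) tp tq by (auto simp: te_node)
      moreover have "\<not> (tree_eq A B' \<and> tree_eq B A')"
      proof
        assume "tree_eq A B' \<and> tree_eq B A'"
        then have "fl B' = fl A" "fl A' = fl B" using te_fl dA dB by auto
        then show False using flA flB flA' flB' ab(6) ab'(6) by simp
      qed
      ultimately have e: "tree_eq A A'" "tree_eq B B'" by auto
      have l1: "length (rev (take (length a + 2) \<sigma>)) < length \<sigma>" "length (drop (length a + 2) \<sigma>) < length \<sigma>"
        using ab(3) by auto
      have r1: "map uminus (rev a) @ [-1] = map uminus (rev a') @ [-1]"
        "rev (take (length a + 2) \<sigma>) = rev (take (length a' + 2) \<tau>)"
        using less.hyps[OF l1(1) ab(4) ab'(4)] e(1) by (auto simp: A_def A'_def)
      have r2: "b @ [-1] = b' @ [-1]" "drop (length a + 2) \<sigma> = drop (length a' + 2) \<tau>"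
        using less.hyps[OF l1(2) ab(5) ab'(5)] e(2) by (auto simp: B_def B'_def)
      have "map uminus (rev a) = map uminus (rev a')" using r1(1) by simp
      then have "map uminus (map uminus (rev a)) = map uminus (map uminus (rev a'))" by simp
      then have aa: "a = a'" by (simp add: comp_def)
      have bb: "b = b'" using r2(1) by simp
      have "take (length a + 2) \<sigma> = take (length a + 2) \<tau>" using r1(2) aa by simp
      then have "\<sigma> = \<tau>" using r2(2) aa by (metis append_take_drop_id)
      then show ?thesis using ab(1) ab'(1) aa bb by simp
    qed
  qed
qed


lemma mot_leaves: "mot p \<sigma> \<Longrightarrow> tree_eq (psi p \<sigma>) t \<Longrightarrow> set \<sigma> = set (leaves t)"
  using psi_props te_leaves by metis

lemma dy_Nil: "dy []" by (simp add: dy_def)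

lemma surj_b:
  assumes "mot p' \<sigma>'" "tree_eq (psi p' \<sigma>') r" "x \<notin> set (leaves r)"
  shows "\<exists>p \<sigma>. mot p \<sigma> \<and> tree_eq (psi p \<sigma>) (Node False (Leaf False x) r)"
proof -
  from assms(1) obtain c where c: "p' = c @ [-1]" "dy c" and w: "wl p' \<sigma>'" and ds: "distinct \<sigma>'"
    by (auto simp: mot_def)
  have len: "length \<sigma>' = length c + 2" using wl_len[OF w] c by simp
  then obtain y s where ys: "\<sigma>' = y # s" by (cases \<sigma>') auto
  have xs: "x \<notin> set \<sigma>'" using mot_leaves[OF assms(1,2)] assms(3) by simp
  have "wl (0 # p') (x # \<sigma>')" using w ys by simp
  moreover have "dy (0 # c)" using c by (simp add: dy_def)
  ultimately have m: "mot (0 # c @ [-1]) (x # \<sigma>')" using xs ds c by (auto simp: mot_def)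
  have "psi (0 # c @ [-1]) (x # \<sigma>') = Node False (Leaf False x) (psi p' \<sigma>')"
    using psi_U1[of "x # \<sigma>'" c] len c by simp
  then have "tree_eq (psi (0 # c @ [-1]) (x # \<sigma>')) (Node False (Leaf False x) r)"
    using assms(2) by (simp add: tree_eq.keep tree_eq.leaf)
  then show ?thesis using m by blast
qed

lemma surj_d:
  assumes "mot p1 s1" "mot p2 s2" "hd s1 < hd s2" "set s1 \<inter> set s2 = {}"
  shows "\<exists>p \<sigma>. mot p \<sigma> \<and> psi p \<sigma> = Node False (psi p1 s1) (psi p2 s2)"
proof -
  from assms(1) obtain a1 where a1: "p1 = a1 @ [-1]" "dy a1" and w1: "wl p1 s1" and d1: "distinct s1"
    by (auto simp: mot_def)
  from assms(2) obtain b where b: "p2 = b @ [-1]" "dy b" and w2: "wl p2 s2" and d2: "distinct s2"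
    by (auto simp: mot_def)
  define a where "a = map uminus (rev a1)"
  have dya: "dy a" using dy_rev[OF a1(2)] by (simp add: a_def)
  have aa: "map uminus (rev a) = a1" by (simp add: a_def rev_map comp_def)
  have l1: "length s1 = length a + 2" using wl_len[OF w1] a1 by (simp add: a_def)
  have l2: "length s2 = length b + 2" using wl_len[OF w2] b by simp
  have wr: "wl (1 # a) (rev s1)" using wl_rev[OF w1] a1 by (simp add: a_def)
  have ne1: "s1 \<noteq> []" "s2 \<noteq> []" using l1 l2 by auto
  have lk: "length (rev s1) = length (1 # a) + 1" using l1 by simp
  have "wl ((1 # a) @ (-1) # (b @ [-1])) (rev s1 @ s2)"
    using iffD2[OF wl_append[OF lk, of "-1" "b @ [-1]" s2]] wr w2 b assms(3) ne1
    by (simp add: last_rev)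
  then have W: "wl (1 # a @ [-1] @ b @ [-1]) (rev s1 @ s2)" by simp
  have "pos 1 a" using dya pos_mono[of 0 a 1] by (simp add: dy_def)
  then have "dy (1 # a @ [-1] @ b)" using dya b(2) by (simp add: dy_def)
  then have M: "mot (1 # a @ [-1] @ b @ [-1]) (rev s1 @ s2)"
    using W d1 d2 assms(4) unfolding mot_def
    by (intro conjI exI[of _ "1 # a @ [-1] @ b"]) auto
  have "psi (1 # a @ [-1] @ b @ [-1]) (rev s1 @ s2) =
    Node False (psi (map uminus (rev a) @ [-1]) (rev (take (length a + 2) (rev s1 @ s2))))
               (psi (b @ [-1]) (drop (length a + 2) (rev s1 @ s2)))"
    using psi_U2[OF dya, of "rev s1 @ s2" b] l1 l2 by simp
  also have "\<dots> = Node False (psi p1 s1) (psi p2 s2)" using aa a1 b l1 by simp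
  finally show ?thesis using M by blast
qed

lemma psi_surj:
  "nmarks t = 0 \<Longrightarrow> distinct (leaves t) \<Longrightarrow> \<not> isLeaf t \<Longrightarrow> \<exists>p \<sigma>. mot p \<sigma> \<and> tree_eq (psi p \<sigma>) t"
proof (induction t)
  case (Leaf m x) then show ?case by simp
next
  case (Node m l r)
  have m: "m = False" and nl: "nmarks l = 0" and nr: "nmarks r = 0"
    using Node.prems by (auto split: if_splits)
  have dl: "distinct (leaves l)" and dr: "distinct (leaves r)"
    and dj: "set (leaves l) \<inter> set (leaves r) = {}" using Node.prems by auto
  show ?case
  proof (cases "isLeaf l")
    case lL: True
    then obtain ml x where lx: "l = Leaf ml x" by (cases l) auto
    have ml: "ml = False" using nl lx by (auto split: if_splits)
    show ?thesis
    proof (cases "isLeaf r")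
      case True
      then obtain mr y where ry: "r = Leaf mr y" by (cases r) auto
      have mr: "mr = False" using nr ry by (auto split: if_splits)
      have xy: "x \<noteq> y" using dj lx ry by auto
      have M: "mot [-1] [min x y, max x y]" using xy dy_Nil unfolding mot_def
        by (intro conjI exI[of _ "[]"]) (auto simp: min_def max_def)
      have P: "psi [-1] [min x y, max x y] = Node False (Leaf False (min x y)) (Leaf False (max x y))"
        by (simp add: psi_U0)
      have "tree_eq (psi [-1] [min x y, max x y]) (Node m l r)"
      proof (cases "x < y")
        case True then show ?thesis using P m lx ry ml mr by (simp add: te_refl)
      next
        case False then show ?thesis using P m lx ry ml mr xy
          by (simp add: min_def max_def tree_eq.swap tree_eq.leaf)
      qed
      then show ?thesis using M by blast
    next
      case False
      from Node.IH(2)[OF nr dr False] obtain p' \<sigma>' where "mot p' \<sigma>'" "tree_eq (psi p' \<sigma>') r" by blast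
      from surj_b[OF this] show ?thesis using dj lx ml m by auto
    qed
  next
    case lN: False
    from Node.IH(1)[OF nl dl lN] obtain p1 s1 where P1: "mot p1 s1" "tree_eq (psi p1 s1) l" by blast
    show ?thesis
    proof (cases "isLeaf r")
      case True
      then obtain mr y where ry: "r = Leaf mr y" by (cases r) auto
      have mr: "mr = False" using nr ry by (auto split: if_splits)
      from surj_b[OF P1, of y] obtain p \<sigma> where "mot p \<sigma>" "tree_eq (psi p \<sigma>) (Node False (Leaf False y) l)"
        using dj ry by auto
      moreover have "tree_eq (Node False (Leaf False y) l) (Node m l r)" using m ry mr te_swap by simp
      ultimately show ?thesis using te_trans by blast
    next
      case False
      from Node.IH(2)[OF nr dr False] obtain p2 s2 where P2: "mot p2 s2" "tree_eq (psi p2 s2) r" by blast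
      have S: "set s1 = set (leaves l)" "set s2 = set (leaves r)" using mot_leaves P1 P2 by auto
      have dj': "set s1 \<inter> set s2 = {}" using S dj by simp
      have ne: "s1 \<noteq> []" "s2 \<noteq> []" using P1(1) P2(1) wl_len by (fastforce simp: mot_def)+
      have hne: "hd s1 \<noteq> hd s2" using dj' ne by (metis disjoint_iff list.set_sel(1))
      show ?thesis
      proof (cases "hd s1 < hd s2")
        case True
        from surj_d[OF P1(1) P2(1) True dj'] obtain p \<sigma> where
          "mot p \<sigma>" "psi p \<sigma> = Node False (psi p1 s1) (psi p2 s2)" by blast
        moreover have "tree_eq (Node False (psi p1 s1) (psi p2 s2)) (Node m l r)"
          using P1 P2 m by (simp add: tree_eq.keep)
        ultimately show ?thesis by metis
      next
        case False
        then have lt: "hd s2 < hd s1" using hne by simp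
        from surj_d[OF P2(1) P1(1) lt] dj' obtain p \<sigma> where
          "mot p \<sigma>" "psi p \<sigma> = Node False (psi p2 s2) (psi p1 s1)" by blast
        moreover have "tree_eq (Node False (psi p2 s2) (psi p1 s1)) (Node m l r)"
          using P1 P2 m by (simp add: tree_eq.swap)
        ultimately show ?thesis by metis
      qed
    qed
  qed
qed


lemma mark_root_props: "nmarks t = 0 \<Longrightarrow> nmarks (mark_root t) = 1 \<and> leaves (mark_root t) = leaves t"
  by (cases t) (auto split: if_splits)

lemma psi_node: "mot p \<sigma> \<Longrightarrow> \<exists>l r. psi p \<sigma> = Node False l r"
proof -
  assume m: "mot p \<sigma>"
  have "\<not> isLeaf (psi p \<sigma>)" "nmarks (psi p \<sigma>) = 0" using psi_props[OF m] by auto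
  then show ?thesis by (cases "psi p \<sigma>") (auto split: if_splits)
qed

lemma psi'_props:
  "pp p \<sigma> \<Longrightarrow> nmarks (psi' p \<sigma>) = 1 \<and> set (leaves (psi' p \<sigma>)) = set \<sigma> \<and>
     length (leaves (psi' p \<sigma>)) = length \<sigma>"
proof (induction "length \<sigma>" arbitrary: p \<sigma> rule: less_induct)
  case less
  from pp_cases[OF less.prems] show ?case
  proof (elim disjE exE conjE)
    fix x assume "p = []" "\<sigma> = [x]"
    then show ?thesis by (simp add: psi'_V0)
  next
    fix c assume c: "p = 0 # c" "length \<sigma> = length c + 2" "pp c (tl \<sigma>)" "\<sigma> = hd \<sigma> # tl \<sigma>"
    have IH: "nmarks (psi' c (tl \<sigma>)) = 1 \<and> set (leaves (psi' c (tl \<sigma>))) = set (tl \<sigma>) \<and>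
     length (leaves (psi' c (tl \<sigma>))) = length (tl \<sigma>)"
      using less.hyps[OF _ c(3)] c(2) by simp
    have "set \<sigma> = insert (hd \<sigma>) (set (tl \<sigma>))" using c(4) by (metis list.simps(15))
    moreover have "length \<sigma> = Suc (length (tl \<sigma>))" using c(2) by simp
    ultimately show ?thesis using IH c(1,2) by (simp add: psi'_V1)
  next
    fix a assume a: "p = 1 # a" "dy a" "length \<sigma> = length a + 2" "mot (map uminus (rev a) @ [-1]) (rev \<sigma>)"
    have t: "psi' p \<sigma> = mark_root (psi (map uminus (rev a) @ [-1]) (rev \<sigma>))"
      using psi'_V2[OF a(2,3)] a(1) by simp
    show ?thesis using t psi_props[OF a(4)] mark_root_props by simp
  next
    fix a d w assume a: "p = 1 # a @ [d] @ w" "dy a" "d \<in> {-1,1}" "pos 0 w"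
      "length \<sigma> = length a + length w + 3"
      "mot (map uminus (rev a) @ [-1]) (rev (take (length a + 2) \<sigma>))"
      "pp w (drop (length a + 2) \<sigma>)"
    have t: "psi' p \<sigma> = Node False (psi (map uminus (rev a) @ [-1]) (rev (take (length a + 2) \<sigma>)))
               (psi' w (drop (length a + 2) \<sigma>))"
      using psi'_V3[OF a(2-5)] a(1) by simp
    have IH: "nmarks (psi' w (drop (length a + 2) \<sigma>)) = 1 \<and> set (leaves (psi' w (drop (length a + 2) \<sigma>))) = set (drop (length a + 2) \<sigma>) \<and>
     length (leaves (psi' w (drop (length a + 2) \<sigma>))) = length (drop (length a + 2) \<sigma>)"
      using less.hyps[OF _ a(7)] a(5) by simp
    have "set \<sigma> = set (take (length a + 2) \<sigma>) \<union> set (drop (length a + 2) \<sigma>)"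
      by (metis append_take_drop_id set_append)
    then show ?thesis using t IH psi_props[OF a(6)] a(5) by simp
  qed
qed

lemma psi'_distinct: "pp p \<sigma> \<Longrightarrow> distinct (leaves (psi' p \<sigma>))"
  using psi'_props[of p \<sigma>] distinct_of_set_len[of \<sigma>] by (auto simp: pp_def)

lemma pp_leaves: "pp p \<sigma> \<Longrightarrow> tree_eq (psi' p \<sigma>) t \<Longrightarrow> set \<sigma> = set (leaves t)"
  using psi'_props te_leaves by metis


lemma psi'_shape:
  assumes "pp p \<sigma>"
  shows "(\<exists>x. psi' p \<sigma> = Leaf True x) \<or>
    (\<exists>x R. psi' p \<sigma> = Node False (Leaf False x) R \<and> nmarks R = 1) \<or>
    (\<exists>l r. psi' p \<sigma> = Node True l r) \<or>
    (\<exists>A B. psi' p \<sigma> = Node False A B \<and> \<not> isLeaf A \<and> nmarks A = 0 \<and> nmarks B = 1)"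
  using pp_cases[OF assms]
proof (elim disjE exE conjE)
  fix x assume "p = []" "\<sigma> = [x]"
  then show ?thesis by (simp add: psi'_V0)
next
  fix c assume c: "p = 0 # c" "length \<sigma> = length c + 2" "pp c (tl \<sigma>)"
  then show ?thesis using psi'_props[OF c(3)] by (simp add: psi'_V1)
next
  fix a assume a: "p = 1 # a" "dy a" "length \<sigma> = length a + 2" "mot (map uminus (rev a) @ [-1]) (rev \<sigma>)"
  obtain l r where "psi (map uminus (rev a) @ [-1]) (rev \<sigma>) = Node False l r" using psi_node[OF a(4)] by blast
  then show ?thesis using psi'_V2[OF a(2,3)] a(1) by simp
next
  fix a d w assume a: "p = 1 # a @ [d] @ w" "dy a" "d \<in> {-1,1}" "pos 0 w"
    "length \<sigma> = length a + length w + 3"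
    "mot (map uminus (rev a) @ [-1]) (rev (take (length a + 2) \<sigma>))"
    "pp w (drop (length a + 2) \<sigma>)"
  then show ?thesis using psi'_V3[OF a(2-5)] psi_props[OF a(6)] psi'_props[OF a(7)] by simp
qed

lemma shape_kind:
  "(\<exists>x. t = Leaf True x) \<or> (\<exists>x R. t = Node False (Leaf False x) R \<and> nmarks R = 1) \<or>
    (\<exists>l r. t = Node True l r) \<or> (\<exists>A B. t = Node False A B \<and> \<not> isLeaf A \<and> nmarks A = 0 \<and> nmarks B = 1)
   \<Longrightarrow> tree_eq t t' \<Longrightarrow>
   ((\<exists>x. t = Leaf True x) \<longleftrightarrow> (\<exists>x. t' = Leaf True x)) \<and>
   ((\<exists>l r. t = Node True l r) \<longleftrightarrow> (\<exists>l r. t' = Node True l r)) \<and>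
   ((\<exists>x R. t = Node False (Leaf False x) R \<and> nmarks R = 1) \<longrightarrow>
      \<not> (\<exists>A B. t' = Node False A B \<and> \<not> isLeaf A \<and> nmarks A = 0 \<and> nmarks B = 1))"
  apply (elim disjE exE conjE)
  apply (auto simp: te_leaf te_node dest: te_isLeaf te_nmarks)
  done



fun rm :: "ltree \<Rightarrow> bool" where "rm (Leaf m _) = m" | "rm (Node m _ _) = m"
fun isUL :: "ltree \<Rightarrow> bool" where "isUL (Leaf m _) = (\<not> m)" | "isUL (Node _ _ _) = False"
fun ulc :: "ltree \<Rightarrow> bool" where "ulc (Node _ l r) = (isUL l \<or> isUL r)" | "ulc (Leaf _ _) = False"

lemma te_isUL: "tree_eq t t' \<Longrightarrow> isUL t' = isUL t"
  by (cases rule: tree_eq.cases) auto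

lemma te_inv: "tree_eq t t' \<Longrightarrow> rm t' = rm t \<and> ulc t' = ulc t \<and> isLeaf t' = isLeaf t"
  by (cases rule: tree_eq.cases) (auto dest: te_isUL)

lemma nm1_UL: "nmarks B = 1 \<Longrightarrow> \<not> isUL B"
  by (cases B) (auto split: if_splits)

lemma nL_UL: "\<not> isLeaf A \<Longrightarrow> \<not> isUL A"
  by (cases A) auto

lemma psi'_inj:
  "pp p \<sigma> \<Longrightarrow> pp q \<tau> \<Longrightarrow> tree_eq (psi' p \<sigma>) (psi' q \<tau>) \<Longrightarrow> p = q \<and> \<sigma> = \<tau>"
proof (induction "length \<sigma>" arbitrary: p \<sigma> q \<tau> rule: less_induct)
  case less
  have inv: "rm (psi' q \<tau>) = rm (psi' p \<sigma>) \<and> ulc (psi' q \<tau>) = ulc (psi' p \<sigma>) \<and> isLeaf (psi' q \<tau>) = isLeaf (psi' p \<sigma>)"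
    using te_inv[OF less.prems(3)] .
  have pq: "pp q \<tau>" by fact
  from pp_cases[OF less.prems(1)] show ?case
  proof (elim disjE exE conjE)
    fix x assume s: "p = []" "\<sigma> = [x]"
    then have tp: "psi' p \<sigma> = Leaf True x" by (simp add: psi'_V0)
    from pp_cases[OF pq] show ?thesis
    proof (elim disjE exE conjE)
      fix x' assume "q = []" "\<tau> = [x']"
      then show ?thesis using s tp less.prems(3) by (simp add: psi'_V0 te_leaf)
    next
      fix c assume "q = 0 # c" "length \<tau> = length c + 2"
      then show ?thesis using inv tp by (simp add: psi'_V1)
    next
      fix a assume a: "q = 1 # a" "dy a" "length \<tau> = length a + 2" "mot (map uminus (rev a) @ [-1]) (rev \<tau>)"
      then show ?thesis using inv tp psi_node[OF a(4)] psi'_V2[OF a(2,3)] by auto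
    next
      fix a d w assume a: "q = 1 # a @ [d] @ w" "dy a" "d \<in> {-1,1}" "pos 0 w"
        "length \<tau> = length a + length w + 3"
      then show ?thesis using inv tp psi'_V3[OF a(2-5)] by simp
    qed
  next
    fix c assume c: "p = 0 # c" "length \<sigma> = length c + 2" "pp c (tl \<sigma>)" "\<sigma> = hd \<sigma> # tl \<sigma>"
    then have tp: "psi' p \<sigma> = Node False (Leaf False (hd \<sigma>)) (psi' c (tl \<sigma>))" by (simp add: psi'_V1)
    from pp_cases[OF pq] show ?thesis
    proof (elim disjE exE conjE)
      fix x' assume "q = []" "\<tau> = [x']"
      then show ?thesis using inv tp by (simp add: psi'_V0)
    next
      fix c' assume c': "q = 0 # c'" "length \<tau> = length c' + 2" "pp c' (tl \<tau>)" "\<tau> = hd \<tau> # tl \<tau>"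
      then have tq: "psi' q \<tau> = Node False (Leaf False (hd \<tau>)) (psi' c' (tl \<tau>))" by (simp add: psi'_V1)
      have "hd \<sigma> = hd \<tau> \<and> tree_eq (psi' c (tl \<sigma>)) (psi' c' (tl \<tau>))"
        using less.prems(3) tp tq psi'_props[OF c'(3)] by (auto simp: te_node te_leaf)
      moreover then have "c = c' \<and> tl \<sigma> = tl \<tau>" using less.hyps[OF _ c(3) c'(3)] c(2) by simp
      ultimately show ?thesis using c(1,4) c'(1,4) by metis
    next
      fix a assume a: "q = 1 # a" "dy a" "length \<tau> = length a + 2" "mot (map uminus (rev a) @ [-1]) (rev \<tau>)"
      then show ?thesis using inv tp psi_node[OF a(4)] psi'_V2[OF a(2,3)] by auto
    next
      fix a d w assume a: "q = 1 # a @ [d] @ w" "dy a" "d \<in> {-1,1}" "pos 0 w"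
        "length \<tau> = length a + length w + 3"
        "mot (map uminus (rev a) @ [-1]) (rev (take (length a + 2) \<tau>))"
        "pp w (drop (length a + 2) \<tau>)"
      then show ?thesis using inv tp psi'_V3[OF a(2-5)] psi_props[OF a(6)] psi'_props[OF a(7)]
        nm1_UL nL_UL by simp
    qed
  next
    fix a assume a: "p = 1 # a" "dy a" "length \<sigma> = length a + 2" "mot (map uminus (rev a) @ [-1]) (rev \<sigma>)"
    obtain l r where lr: "psi (map uminus (rev a) @ [-1]) (rev \<sigma>) = Node False l r" using psi_node[OF a(4)] by blast
    have tp: "psi' p \<sigma> = Node True l r" using psi'_V2[OF a(2,3)] a(1) lr by simp
    from pp_cases[OF pq] show ?thesis
    proof (elim disjE exE conjE)
      fix x' assume "q = []" "\<tau> = [x']"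
      then show ?thesis using inv tp by (simp add: psi'_V0)
    next
      fix c assume "q = 0 # c" "length \<tau> = length c + 2"
      then show ?thesis using inv tp by (simp add: psi'_V1)
    next
      fix a' assume a': "q = 1 # a'" "dy a'" "length \<tau> = length a' + 2" "mot (map uminus (rev a') @ [-1]) (rev \<tau>)"
      obtain l' r' where lr': "psi (map uminus (rev a') @ [-1]) (rev \<tau>) = Node False l' r'" using psi_node[OF a'(4)] by blast
      have tq: "psi' q \<tau> = Node True l' r'" using psi'_V2[OF a'(2,3)] a'(1) lr' by simp
      have "tree_eq (Node False l r) (Node False l' r')" using less.prems(3) tp tq te_remark by metis
      then have "map uminus (rev a) @ [-1] = map uminus (rev a') @ [-1] \<and> rev \<sigma> = rev \<tau>"
        using psi_inj[OF a(4) a'(4)] lr lr' by simp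
      then have "map uminus (map uminus (rev a)) = map uminus (map uminus (rev a')) \<and> \<sigma> = \<tau>" by simp
      then show ?thesis using a(1) a'(1) by (simp add: comp_def)
    next
      fix a' d w assume a': "q = 1 # a' @ [d] @ w" "dy a'" "d \<in> {-1,1}" "pos 0 w"
        "length \<tau> = length a' + length w + 3"
      then show ?thesis using inv tp psi'_V3[OF a'(2-5)] by simp
    qed
  next
    fix a d w assume a: "p = 1 # a @ [d] @ w" "dy a" "d \<in> {-1,1}" "pos 0 w"
      "length \<sigma> = length a + length w + 3"
      "mot (map uminus (rev a) @ [-1]) (rev (take (length a + 2) \<sigma>))"
      "pp w (drop (length a + 2) \<sigma>)"
      "d = -1 \<longleftrightarrow> last (take (length a + 2) \<sigma>) < hd (drop (length a + 2) \<sigma>)"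
    define A where "A = psi (map uminus (rev a) @ [-1]) (rev (take (length a + 2) \<sigma>))"
    define B where "B = psi' w (drop (length a + 2) \<sigma>)"
    have tp: "psi' p \<sigma> = Node False A B" using psi'_V3[OF a(2-5)] a(1) by (simp add: A_def B_def)
    have pA: "nmarks A = 0" "\<not> isLeaf A" using psi_props[OF a(6)] by (auto simp: A_def)
    have pB: "nmarks B = 1" using psi'_props[OF a(7)] by (simp add: B_def)
    from pp_cases[OF pq] show ?thesis
    proof (elim disjE exE conjE)
      fix x' assume "q = []" "\<tau> = [x']"
      then show ?thesis using inv tp by (simp add: psi'_V0)
    next
      fix c assume c: "q = 0 # c" "length \<tau> = length c + 2"
      then show ?thesis using inv tp pA pB nm1_UL nL_UL by (simp add: psi'_V1)
    next
      fix a' assume a': "q = 1 # a'" "dy a'" "length \<tau> = length a' + 2" "mot (map uminus (rev a') @ [-1]) (rev \<tau>)"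
      then show ?thesis using inv tp psi_node[OF a'(4)] psi'_V2[OF a'(2,3)] by auto
    next
      fix a' d' w' assume a': "q = 1 # a' @ [d'] @ w'" "dy a'" "d' \<in> {-1,1}" "pos 0 w'"
        "length \<tau> = length a' + length w' + 3"
        "mot (map uminus (rev a') @ [-1]) (rev (take (length a' + 2) \<tau>))"
        "pp w' (drop (length a' + 2) \<tau>)"
        "d' = -1 \<longleftrightarrow> last (take (length a' + 2) \<tau>) < hd (drop (length a' + 2) \<tau>)"
      define A' where "A' = psi (map uminus (rev a') @ [-1]) (rev (take (length a' + 2) \<tau>))"
      define B' where "B' = psi' w' (drop (length a' + 2) \<tau>)"
      have tq: "psi' q \<tau> = Node False A' B'" using psi'_V3[OF a'(2-5)] a'(1) by (simp add: A'_def B'_def)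
      have pA': "nmarks A' = 0" using psi_props[OF a'(6)] by (auto simp: A'_def)
      have pB': "nmarks B' = 1" using psi'_props[OF a'(7)] by (simp add: B'_def)
      have "(tree_eq A A' \<and> tree_eq B B') \<or> (tree_eq A B' \<and> tree_eq B A')"
        using less.prems(3) tp tq by (auto simp: te_node)
      then have e: "tree_eq A A'" "tree_eq B B'" using pA pB pA' pB' te_nmarks by (metis zero_neq_one)+
      have l1: "length (drop (length a + 2) \<sigma>) < length \<sigma>" using a(5) by auto
      have r1: "map uminus (rev a) @ [-1] = map uminus (rev a') @ [-1]"
        "rev (take (length a + 2) \<sigma>) = rev (take (length a' + 2) \<tau>)"
        using psi_inj[OF a(6) a'(6)] e(1) by (auto simp: A_def A'_def)
      have r2: "w = w'" "drop (length a + 2) \<sigma> = drop (length a' + 2) \<tau>"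
        using less.hyps[OF l1 a(7) a'(7)] e(2) by (auto simp: B_def B'_def)
      have "map uminus (rev a) = map uminus (rev a')" using r1(1) by simp
      then have "map uminus (map uminus (rev a)) = map uminus (map uminus (rev a'))" by simp
      then have aa: "a = a'" by (simp add: comp_def)
      have "take (length a + 2) \<sigma> = take (length a + 2) \<tau>" using r1(2) aa by simp
      then have st: "\<sigma> = \<tau>" using r2(2) aa by (metis append_take_drop_id)
      have "d = d'" using a(3,8) a'(3,8) st aa by auto
      then show ?thesis using a(1) a'(1) aa r2(1) st by simp
    qed
  qed
qed


lemma surj1':
  assumes "pp p2 s2" "tree_eq (psi' p2 s2) r" "x \<notin> set (leaves r)"
  shows "\<exists>p \<sigma>. pp p \<sigma> \<and> tree_eq (psi' p \<sigma>) (Node False (Leaf False x) r)"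
proof -
  from assms(1) have w: "wl p2 s2" and ds: "distinct s2" and ps: "pos 0 p2" by (auto simp: pp_def)
  have len: "length s2 = length p2 + 1" using wl_len[OF w] .
  then obtain y s where ys: "s2 = y # s" by (cases s2) auto
  have xs: "x \<notin> set s2" using pp_leaves[OF assms(1,2)] assms(3) by simp
  have "wl (0 # p2) (x # s2)" using w ys by simp
  then have P: "pp (0 # p2) (x # s2)" using xs ds ps by (simp add: pp_def)
  have "psi' (0 # p2) (x # s2) = Node False (Leaf False x) (psi' p2 s2)"
    using psi'_V1[of "x # s2" p2] len by simp
  then have "tree_eq (psi' (0 # p2) (x # s2)) (Node False (Leaf False x) r)"
    using assms(2) by (simp add: tree_eq.keep tree_eq.leaf)
  then show ?thesis using P by blast
qed

lemma surj3':
  assumes "mot p1 s1" "tree_eq (psi p1 s1) l" "pp p2 s2" "tree_eq (psi' p2 s2) r"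
    "set (leaves l) \<inter> set (leaves r) = {}"
  shows "\<exists>p \<sigma>. pp p \<sigma> \<and> tree_eq (psi' p \<sigma>) (Node False l r)"
proof -
  from assms(1) obtain a1 where a1: "p1 = a1 @ [-1]" "dy a1" and w1: "wl p1 s1" and d1: "distinct s1"
    by (auto simp: mot_def)
  from assms(3) have w2: "wl p2 s2" and d2: "distinct s2" and ps: "pos 0 p2" by (auto simp: pp_def)
  have S: "set s1 = set (leaves l)" "set s2 = set (leaves r)"
    using mot_leaves[OF assms(1,2)] pp_leaves[OF assms(3,4)] by auto
  define a where "a = map uminus (rev a1)"
  define d :: int where "d = (if hd s1 < hd s2 then -1 else 1)"
  have dya: "dy a" using dy_rev[OF a1(2)] by (simp add: a_def)
  have aa: "map uminus (rev a) = a1" by (simp add: a_def rev_map comp_def)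
  have l1: "length s1 = length a + 2" using wl_len[OF w1] a1 by (simp add: a_def)
  have l2: "length s2 = length p2 + 1" using wl_len[OF w2] by simp
  have wr: "wl (1 # a) (rev s1)" using wl_rev[OF w1] a1 by (simp add: a_def)
  have ne1: "s1 \<noteq> []" "s2 \<noteq> []" using l1 l2 by auto
  have dj: "set s1 \<inter> set s2 = {}" using S assms(5) by simp
  have hne: "hd s1 \<noteq> hd s2" using dj ne1 by (metis disjoint_iff list.set_sel(1))
  have lk: "length (rev s1) = length (1 # a) + 1" using l1 by simp
  have "wl ((1 # a) @ d # p2) (rev s1 @ s2)"
    using iffD2[OF wl_append[OF lk, of d p2 s2]] wr w2 ne1 hne
    by (auto simp: last_rev d_def)
  then have W: "wl (1 # a @ [d] @ w) (rev s1 @ s2)" if "w = p2" for w using that by simp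
  have "pos 1 a" using dya pos_mono[of 0 a 1] by (simp add: dy_def)
  moreover have "pos (1 + d) p2" using ps pos_mono[of 0 p2 "1 + d"] by (simp add: d_def)
  ultimately have "pos 0 (1 # a @ [d] @ p2)" using dya by (simp add: dy_def d_def)
  then have P: "pp (1 # a @ [d] @ p2) (rev s1 @ s2)"
    using W d1 d2 dj by (simp add: pp_def)
  have dd: "d \<in> {-1,1}" by (simp add: d_def)
  have "psi' (1 # a @ [d] @ p2) (rev s1 @ s2) =
    Node False (psi (map uminus (rev a) @ [-1]) (rev (take (length a + 2) (rev s1 @ s2))))
               (psi' p2 (drop (length a + 2) (rev s1 @ s2)))"
    using psi'_V3[OF dya dd ps, of "rev s1 @ s2"] l1 l2 by simp
  also have "\<dots> = Node False (psi p1 s1) (psi' p2 s2)" using aa a1 l1 by simp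
  finally have "tree_eq (psi' (1 # a @ [d] @ p2) (rev s1 @ s2)) (Node False l r)"
    using assms(2,4) by (simp add: tree_eq.keep)
  then show ?thesis using P by blast
qed

lemma surj_node_false:
  assumes "nmarks l = 0" "nmarks r = 1" "distinct (leaves (Node False l r))"
    "\<exists>p \<sigma>. pp p \<sigma> \<and> tree_eq (psi' p \<sigma>) r"
  shows "\<exists>p \<sigma>. pp p \<sigma> \<and> tree_eq (psi' p \<sigma>) (Node False l r)"
proof -
  from assms(4) obtain p2 s2 where P2: "pp p2 s2" "tree_eq (psi' p2 s2) r" by blast
  have dl: "distinct (leaves l)" and dj: "set (leaves l) \<inter> set (leaves r) = {}" using assms(3) by auto
  show ?thesis
  proof (cases "isLeaf l")
    case True
    then obtain ml x where lx: "l = Leaf ml x" by (cases l) auto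
    have "ml = False" using assms(1) lx by (auto split: if_splits)
    then show ?thesis using surj1'[OF P2, of x] dj lx by auto
  next
    case False
    from psi_surj[OF assms(1) dl False] obtain p1 s1 where "mot p1 s1" "tree_eq (psi p1 s1) l" by blast
    from surj3'[OF this P2 dj] show ?thesis .
  qed
qed

lemma psi'_surj:
  "nmarks t = 1 \<Longrightarrow> distinct (leaves t) \<Longrightarrow> \<exists>p \<sigma>. pp p \<sigma> \<and> tree_eq (psi' p \<sigma>) t"
proof (induction t)
  case (Leaf m x)
  then have "m = True" by (auto split: if_splits)
  moreover have "pp [] [x]" by (simp add: pp_def)
  ultimately show ?case by (intro exI[of _ "[]"] exI[of _ "[x]"]) (simp add: psi'_V0 te_refl)
next
  case (Node m l r)
  show ?case
  proof (cases m)
    case True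
    then have nl: "nmarks l = 0" and nr: "nmarks r = 0" using Node.prems by auto
    have "nmarks (Node False l r) = 0" "distinct (leaves (Node False l r))" "\<not> isLeaf (Node False l r)"
      using nl nr Node.prems by auto
    from psi_surj[OF this] obtain p1 s1 where P1: "mot p1 s1" "tree_eq (psi p1 s1) (Node False l r)" by blast
    from P1(1) obtain a1 where a1: "p1 = a1 @ [-1]" "dy a1" and w1: "wl p1 s1" and d1: "distinct s1"
      by (auto simp: mot_def)
    define a where "a = map uminus (rev a1)"
    have dya: "dy a" using dy_rev[OF a1(2)] by (simp add: a_def)
    have aa: "map uminus (rev a) = a1" by (simp add: a_def rev_map comp_def)
    have l1: "length (rev s1) = length a + 2" using wl_len[OF w1] a1 by (simp add: a_def)
    have wr: "wl (1 # a) (rev s1)" using wl_rev[OF w1] a1 by (simp add: a_def)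
    have "pos 1 a" using dya pos_mono[of 0 a 1] by (simp add: dy_def)
    then have P: "pp (1 # a) (rev s1)" using wr d1 by (simp add: pp_def)
    have e: "psi' (1 # a) (rev s1) = mark_root (psi p1 s1)"
      using psi'_V2[OF dya l1] aa a1 by simp
    obtain x y where xy: "psi p1 s1 = Node False x y" using psi_node[OF P1(1)] by blast
    have "tree_eq (Node True x y) (Node True l r)" using P1(2) xy te_remark by metis
    then have "tree_eq (psi' (1 # a) (rev s1)) (Node m l r)" using e xy True by simp
    then show ?thesis using P by blast
  next
    case False
    have nm: "nmarks l + nmarks r = 1" using Node.prems False by simp
    have dl: "distinct (leaves l)" "distinct (leaves r)" using Node.prems by auto
    show ?thesis
    proof (cases "nmarks r = 1")
      case True
      then have "nmarks l = 0" using nm by simp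
      from surj_node_false[OF this True] Node.prems Node.IH(2)[OF True dl(2)] False show ?thesis by simp
    next
      case False2: False
      then have nr: "nmarks r = 0" and nl: "nmarks l = 1" using nm by auto
      have "distinct (leaves (Node False r l))" using Node.prems by auto
      from surj_node_false[OF nr nl this Node.IH(1)[OF nl dl(1)]] obtain p \<sigma> where
        "pp p \<sigma>" "tree_eq (psi' p \<sigma>) (Node False r l)" by blast
      moreover have "tree_eq (Node False r l) (Node m l r)" using False te_swap by simp
      ultimately show ?thesis using te_trans by blast
    qed
  qed
qed


declare phi.simps[simp del] phi'.simps[simp del]

lemma laminv_mono: "finite J \<Longrightarrow> strict_mono_on J (laminv J)"
  unfolding strict_mono_on_def laminv_def
proof (intro allI impI, elim conjE)
  fix x y assume f: "finite J" and xy: "x \<in> J" "y \<in> J" "x < y"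
  have "y \<in> {z \<in> J. z \<le> y}" "y \<notin> {z \<in> J. z \<le> x}" using xy by auto
  moreover have "{z \<in> J. z \<le> x} \<subseteq> {z \<in> J. z \<le> y}" using xy by auto
  ultimately have "{z \<in> J. z \<le> x} \<subset> {z \<in> J. z \<le> y}" by blast
  then show "card {z \<in> J. z \<le> x} < card {z \<in> J. z \<le> y}" using f by (intro psubset_card_mono) auto
qed

lemma laminv_range: "finite J \<Longrightarrow> x \<in> J \<Longrightarrow> laminv J x \<in> {1..card J}"
proof -
  assume f: "finite J" and x: "x \<in> J"
  have "card {z \<in> J. z \<le> x} \<le> card J" using f by (intro card_mono) auto
  moreover have "0 < card {z \<in> J. z \<le> x}" using f x by (subst card_gt_0_iff) auto
  ultimately show ?thesis by (simp add: laminv_def)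
qed

lemma laminv_image: "finite J \<Longrightarrow> laminv J ` J = {1..card J}"
proof -
  assume f: "finite J"
  have inj: "inj_on (laminv J) J" using strict_mono_on_imp_inj_on[OF laminv_mono[OF f]] .
  have sub: "laminv J ` J \<subseteq> {1..card J}" using laminv_range[OF f] by auto
  have "card (laminv J ` J) = card {1..card J}" using card_image[OF inj] by simp
  then show ?thesis using sub by (intro card_subset_eq) auto
qed

lemma sorted_rank:
  fixes xs :: "nat list"
  assumes s: "sorted_wrt (<) xs" and i: "i < length xs"
  shows "card {z \<in> set xs. z \<le> xs ! i} = Suc i"
proof -
  have eq: "{z \<in> set xs. z \<le> xs ! i} = (\<lambda>j. xs ! j) ` {0..i}"
  proof
    show "{z \<in> set xs. z \<le> xs ! i} \<subseteq> (\<lambda>j. xs ! j) ` {0..i}"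
    proof
      fix z assume z: "z \<in> {z \<in> set xs. z \<le> xs ! i}"
      then obtain j where j: "j < length xs" "z = xs ! j" by (auto simp: in_set_conv_nth)
      have "\<not> i < j" using sorted_wrt_nth_less[OF s, of i j] j z by auto
      then show "z \<in> (\<lambda>j. xs ! j) ` {0..i}" using j by auto
    qed
  next
    show "(\<lambda>j. xs ! j) ` {0..i} \<subseteq> {z \<in> set xs. z \<le> xs ! i}"
    proof
      fix z assume "z \<in> (\<lambda>j. xs ! j) ` {0..i}"
      then obtain j where j: "j \<le> i" "z = xs ! j" by auto
      have "xs ! j \<le> xs ! i" using sorted_wrt_nth_less[OF s, of j i] j i
        by (cases "j = i") auto
      then show "z \<in> {z \<in> set xs. z \<le> xs ! i}" using j i by auto
    qed
  qed
  have d: "distinct xs" using s strict_sorted_iff by blast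
  have "inj_on (\<lambda>j. xs ! j) {0..i}" using d i by (auto simp: inj_on_def nth_eq_iff_index_eq)
  then show ?thesis using eq by (simp add: card_image)
qed

lemma lam_laminv: "finite J \<Longrightarrow> x \<in> J \<Longrightarrow> lam J (laminv J x) = x"
proof -
  assume f: "finite J" and x: "x \<in> J"
  define xs where "xs = sorted_list_of_set J"
  have s: "sorted_wrt (<) xs" and sx: "set xs = J" using f by (auto simp: xs_def)
  obtain i where i: "i < length xs" "x = xs ! i" using x sx by (metis in_set_conv_nth)
  have "laminv J x = Suc i" using sorted_rank[OF s i(1)] i(2) sx by (simp add: laminv_def)
  then show ?thesis using i by (simp add: lam_def xs_def)
qed

lemma laminv_id: "x \<in> {1..n} \<Longrightarrow> laminv {1..n} x = x"
proof -
  assume x: "x \<in> {1..n}"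
  have "{y \<in> {1..n}. y \<le> x} = {1..x}" using x by auto
  then show ?thesis by (simp add: laminv_def)
qed


lemma smo_sub: "strict_mono_on A g \<Longrightarrow> B \<subseteq> A \<Longrightarrow> strict_mono_on B g"
  by (auto simp: strict_mono_on_def)

lemma relabel_mark_root: "relabel f (mark_root t) = mark_root (relabel f t)"
  by (cases t) auto

lemma set_take_sub: "set (take k s) \<subseteq> set s" and set_drop_sub: "set (drop k s) \<subseteq> set s"
  by (auto dest: in_set_takeD in_set_dropD)

lemma psi_relabel:
  "mot p \<sigma> \<Longrightarrow> strict_mono_on (set \<sigma>) g \<Longrightarrow> \<forall>x\<in>set \<sigma>. f (g x) = x \<Longrightarrow>
   relabel f (psi p (map g \<sigma>)) = psi p \<sigma>"
proof (induction "length \<sigma>" arbitrary: p \<sigma> rule: less_induct)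
  case less
  note mono = less.prems(2) and inv = less.prems(3)
  from mot_cases[OF less.prems(1)] show ?case
  proof (elim disjE exE conjE)
    fix x y assume s: "p = [-1]" "\<sigma> = [x,y]" "x < y"
    then have "g x < g y" using mono by (auto simp: strict_mono_on_def)
    then show ?thesis using s inv by (simp add: psi_U0 min_def max_def)
  next
    fix c assume c: "p = 0 # c @ [-1]" "length \<sigma> = length c + 3" "mot (c @ [-1]) (tl \<sigma>)"
      "\<sigma> = hd \<sigma> # tl \<sigma>"
    have IH: "relabel f (psi (c @ [-1]) (map g (tl \<sigma>))) = psi (c @ [-1]) (tl \<sigma>)"
    proof -
      have sub: "set (tl \<sigma>) \<subseteq> set \<sigma>" by (cases \<sigma>) auto
      have "length (tl \<sigma>) < length \<sigma>" using c(2) by simp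
      from less.hyps[OF this c(3) smo_sub[OF mono sub]] show ?thesis using inv sub by blast
    qed
    have "psi p (map g \<sigma>) = Node False (Leaf False (hd (map g \<sigma>))) (psi (c @ [-1]) (tl (map g \<sigma>)))"
      using psi_U1[of "map g \<sigma>" c] c(1,2) by simp
    moreover have "hd (map g \<sigma>) = g (hd \<sigma>)" "tl (map g \<sigma>) = map g (tl \<sigma>)" using c(2)
      by (cases \<sigma>; simp)+
    moreover have "f (g (hd \<sigma>)) = hd \<sigma>" using inv c(2) by (cases \<sigma>) auto
    ultimately show ?thesis using IH psi_U1[OF c(2)] c(1) by simp
  next
    fix a b assume ab: "p = 1 # a @ [-1] @ b @ [-1]" "dy a" "dy b" "length \<sigma> = length a + length b + 4"
      "mot (map uminus (rev a) @ [-1]) (rev (take (length a + 2) \<sigma>))"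
      "mot (b @ [-1]) (drop (length a + 2) \<sigma>)"
    define k where "k = length a + 2"
    have IH1: "relabel f (psi (map uminus (rev a) @ [-1]) (map g (rev (take k \<sigma>)))) =
       psi (map uminus (rev a) @ [-1]) (rev (take k \<sigma>))"
      using less.hyps[OF _ ab(5)] ab(4) smo_sub[OF mono, of "set (take k \<sigma>)"] set_take_sub[of k \<sigma>] inv
      by (auto simp: k_def)
    have IH2: "relabel f (psi (b @ [-1]) (map g (drop k \<sigma>))) = psi (b @ [-1]) (drop k \<sigma>)"
      using less.hyps[OF _ ab(6)] ab(4) smo_sub[OF mono, of "set (drop k \<sigma>)"] set_drop_sub[of k \<sigma>] inv
      by (auto simp: k_def)
    have "psi p (map g \<sigma>) = Node False (psi (map uminus (rev a) @ [-1]) (rev (take k (map g \<sigma>))))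
               (psi (b @ [-1]) (drop k (map g \<sigma>)))"
      using psi_U2[OF ab(2), of "map g \<sigma>" b] ab(1,4) by (simp add: k_def)
    moreover have "psi p \<sigma> = Node False (psi (map uminus (rev a) @ [-1]) (rev (take k \<sigma>)))
               (psi (b @ [-1]) (drop k \<sigma>))"
      using psi_U2[OF ab(2), of \<sigma> b] ab(1,4) by (simp add: k_def)
    ultimately show ?thesis using IH1 IH2 by (simp add: take_map drop_map rev_map)
  qed
qed

lemma psi'_relabel:
  "pp p \<sigma> \<Longrightarrow> strict_mono_on (set \<sigma>) g \<Longrightarrow> \<forall>x\<in>set \<sigma>. f (g x) = x \<Longrightarrow>
   relabel f (psi' p (map g \<sigma>)) = psi' p \<sigma>"
proof (induction "length \<sigma>" arbitrary: p \<sigma> rule: less_induct)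
  case less
  note mono = less.prems(2) and inv = less.prems(3)
  from pp_cases[OF less.prems(1)] show ?case
  proof (elim disjE exE conjE)
    fix x assume s: "p = []" "\<sigma> = [x]"
    then show ?thesis using inv by (simp add: psi'_V0)
  next
    fix c assume c: "p = 0 # c" "length \<sigma> = length c + 2" "pp c (tl \<sigma>)"
      "\<sigma> = hd \<sigma> # tl \<sigma>"
    have IH: "relabel f (psi' c (map g (tl \<sigma>))) = psi' c (tl \<sigma>)"
    proof -
      have sub: "set (tl \<sigma>) \<subseteq> set \<sigma>" by (cases \<sigma>) auto
      have "length (tl \<sigma>) < length \<sigma>" using c(2) by simp
      from less.hyps[OF this c(3) smo_sub[OF mono sub]] show ?thesis using inv sub by blast
    qed
    have "psi' p (map g \<sigma>) = Node False (Leaf False (hd (map g \<sigma>))) (psi' c (tl (map g \<sigma>)))"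
      using psi'_V1[of "map g \<sigma>" c] c(1,2) by simp
    moreover have "hd (map g \<sigma>) = g (hd \<sigma>)" "tl (map g \<sigma>) = map g (tl \<sigma>)" using c(2)
      by (cases \<sigma>; simp)+
    moreover have "f (g (hd \<sigma>)) = hd \<sigma>" using inv c(2) by (cases \<sigma>) auto
    ultimately show ?thesis using IH psi'_V1[OF c(2)] c(1) by simp
  next
    fix a assume a: "p = 1 # a" "dy a" "length \<sigma> = length a + 2" "mot (map uminus (rev a) @ [-1]) (rev \<sigma>)"
    have "relabel f (psi (map uminus (rev a) @ [-1]) (map g (rev \<sigma>))) = psi (map uminus (rev a) @ [-1]) (rev \<sigma>)"
      using psi_relabel[OF a(4)] mono inv by simp
    then show ?thesis using psi'_V2[OF a(2,3)] psi'_V2[OF a(2), of "map g \<sigma>"] a(1,3)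
      by (simp add: relabel_mark_root rev_map)
  next
    fix a d w assume a: "p = 1 # a @ [d] @ w" "dy a" "d \<in> {-1,1}" "pos 0 w"
      "length \<sigma> = length a + length w + 3"
      "mot (map uminus (rev a) @ [-1]) (rev (take (length a + 2) \<sigma>))"
      "pp w (drop (length a + 2) \<sigma>)"
    define k where "k = length a + 2"
    have IH1: "relabel f (psi (map uminus (rev a) @ [-1]) (map g (rev (take k \<sigma>)))) =
       psi (map uminus (rev a) @ [-1]) (rev (take k \<sigma>))"
      using psi_relabel[OF a(6)] smo_sub[OF mono, of "set (take k \<sigma>)"] set_take_sub[of k \<sigma>] inv
      by (auto simp: k_def)
    have IH2: "relabel f (psi' w (map g (drop k \<sigma>))) = psi' w (drop k \<sigma>)"
      using less.hyps[OF _ a(7)] a(5) smo_sub[OF mono, of "set (drop k \<sigma>)"] set_drop_sub[of k \<sigma>] inv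
      by (auto simp: k_def)
    have "psi' p (map g \<sigma>) = Node False (psi (map uminus (rev a) @ [-1]) (rev (take k (map g \<sigma>))))
               (psi' w (drop k (map g \<sigma>)))"
      using psi'_V3[OF a(2-4), of "map g \<sigma>"] a(1,5) by (simp add: k_def)
    moreover have "psi' p \<sigma> = Node False (psi (map uminus (rev a) @ [-1]) (rev (take k \<sigma>)))
               (psi' w (drop k \<sigma>))"
      using psi'_V3[OF a(2-5)] a(1) by (simp add: k_def)
    ultimately show ?thesis using IH1 IH2 by (simp add: take_map drop_map rev_map)
  qed
qed

lemma std_common:
  assumes "distinct s"
  shows "distinct (map (laminv (set s)) s) \<and> set (map (laminv (set s)) s) = {1..length s}
    \<and> strict_mono_on (set s) (laminv (set s)) \<and> (\<forall>x\<in>set s. lam (set s) (laminv (set s) x) = x)"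
proof -
  have f: "finite (set s)" by simp
  have m: "strict_mono_on (set s) (laminv (set s))" using laminv_mono[OF f] .
  have "distinct (map (laminv (set s)) s)" using assms strict_mono_on_imp_inj_on[OF m]
    by (simp add: distinct_map)
  moreover have "set (map (laminv (set s)) s) = {1..length s}"
    using laminv_image[OF f] distinct_card[OF assms] by simp
  ultimately show ?thesis using m lam_laminv[OF f] by blast
qed

lemma std_mot:
  assumes "mot P s"
  shows "mot P (map (laminv (set s)) s) \<and> set (map (laminv (set s)) s) = {1..length (map (laminv (set s)) s)}
    \<and> relabel (lam (set s)) (psi P (map (laminv (set s)) s)) = psi P s"
proof -
  have d: "distinct s" and w: "wl P s" using assms by (auto simp: mot_def)
  note C = std_common[OF d]
  have "mot P (map (laminv (set s)) s)" using assms C wl_mono[OF _ w] by (auto simp: mot_def)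
  then show ?thesis using C psi_relabel[OF assms] by simp
qed

lemma std_pp:
  assumes "pp P s"
  shows "pp P (map (laminv (set s)) s) \<and> set (map (laminv (set s)) s) = {1..length (map (laminv (set s)) s)}
    \<and> relabel (lam (set s)) (psi' P (map (laminv (set s)) s)) = psi' P s"
proof -
  have d: "distinct s" and w: "wl P s" using assms by (auto simp: pp_def)
  note C = std_common[OF d]
  have "pp P (map (laminv (set s)) s)" using assms C wl_mono[OF _ w] by (auto simp: pp_def)
  then show ?thesis using C psi'_relabel[OF assms] by simp
qed


lemma phi_gen0: "length \<sigma> \<le> 2 \<Longrightarrow> phi p \<sigma> = Node False (Leaf False 1) (Leaf False 2)"
  by (subst phi.simps) (simp add: Let_def)

lemma phi_gen_0: "2 < length \<sigma> \<Longrightarrow> hd p = 0 \<Longrightarrow> phi p \<sigma> = Node False (Leaf False (hd \<sigma>))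
   (relabel (lam ({1..length \<sigma>} - {hd \<sigma>})) (phi (tl p) (map (laminv ({1..length \<sigma>} - {hd \<sigma>})) (tl \<sigma>))))"
  by (subst phi.simps) (simp add: Let_def)

lemma phi_gen1: "2 < length \<sigma> \<Longrightarrow> hd p = 1 \<Longrightarrow> (LEAST k. 1 \<le> k \<and> psum p k = 0) = K \<Longrightarrow> 1 \<le> K \<Longrightarrow> K < length \<sigma> \<Longrightarrow>
  phi p \<sigma> = Node False
    (relabel (lam (set (take K \<sigma>))) (phi (map uminus (rev (take (K - 1) p))) (map (laminv (set (take K \<sigma>))) (rev (take K \<sigma>)))))
    (relabel (lam (set (drop K \<sigma>))) (phi (drop K p) (map (laminv (set (drop K \<sigma>))) (drop K \<sigma>))))"
  by (subst phi.simps) (simp add: Let_def)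

lemma phi'_gen0: "length \<sigma> \<le> 1 \<Longrightarrow> phi' p \<sigma> = Leaf True (hd \<sigma>)"
  by (subst phi'.simps) (simp add: Let_def)

lemma phi'_gen_0: "1 < length \<sigma> \<Longrightarrow> hd p = 0 \<Longrightarrow> phi' p \<sigma> = Node False (Leaf False (hd \<sigma>))
   (relabel (lam ({1..length \<sigma>} - {hd \<sigma>})) (phi' (tl p) (map (laminv ({1..length \<sigma>} - {hd \<sigma>})) (tl \<sigma>))))"
  by (subst phi'.simps) (simp add: Let_def)

lemma phi'_gen2: "1 < length \<sigma> \<Longrightarrow> hd p = 1 \<Longrightarrow> (GREATEST k. Pk p (length \<sigma>) k) = length \<sigma> \<Longrightarrow>
  phi' p \<sigma> = mark_root (phi (map uminus (rev (take (length \<sigma> - 1) p))) (map (laminv (set \<sigma>)) (rev \<sigma>)))"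
  unfolding Pk_def by (subst phi'.simps) (simp add: Let_def)

lemma phi'_gen3: "1 < length \<sigma> \<Longrightarrow> hd p = 1 \<Longrightarrow> (GREATEST k. Pk p (length \<sigma>) k) = K \<Longrightarrow> 1 \<le> K \<Longrightarrow> K < length \<sigma> \<Longrightarrow>
  phi' p \<sigma> = Node False
    (relabel (lam (set (take K \<sigma>))) (phi (map uminus (rev (take (K - 1) p))) (map (laminv (set (take K \<sigma>))) (rev (take K \<sigma>)))))
    (relabel (lam (set (drop K \<sigma>))) (phi' (drop K p) (map (laminv (set (drop K \<sigma>))) (drop K \<sigma>))))"
  unfolding Pk_def by (subst phi'.simps) (simp add: Let_def)


lemma phi_psi: "mot p \<sigma> \<Longrightarrow> set \<sigma> = {1..length \<sigma>} \<Longrightarrow> phi p \<sigma> = psi p \<sigma>"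
proof (induction "length \<sigma>" arbitrary: p \<sigma> rule: less_induct)
  case less
  note st = less.prems(2)
  from mot_cases[OF less.prems(1)] show ?case
  proof (elim disjE exE conjE)
    fix x y assume s: "p = [-1]" "\<sigma> = [x,y]" "x < y"
    have "x \<in> set \<sigma>" "y \<in> set \<sigma>" using s by auto
    then have "x \<in> {1..2}" "y \<in> {1..2}" using st s by auto
    then have "x = 1 \<and> y = 2" using s(3) by auto
    then show ?thesis using s by (simp add: phi_gen0 psi_U0)
  next
    fix c assume c: "p = 0 # c @ [-1]" "length \<sigma> = length c + 3" "mot (c @ [-1]) (tl \<sigma>)"
      "hd \<sigma> \<notin> set (tl \<sigma>)" "\<sigma> = hd \<sigma> # tl \<sigma>"
    have J: "{1..length \<sigma>} - {hd \<sigma>} = set (tl \<sigma>)" using st c(4,5) by (metis Diff_insert_absorb list.simps(15))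
    note S = std_mot[OF c(3)]
    have IH: "phi (c @ [-1]) (map (laminv (set (tl \<sigma>))) (tl \<sigma>)) = psi (c @ [-1]) (map (laminv (set (tl \<sigma>))) (tl \<sigma>))"
      using less.hyps[of "map (laminv (set (tl \<sigma>))) (tl \<sigma>)"] S c(2) by simp
    have "phi p \<sigma> = Node False (Leaf False (hd \<sigma>)) (psi (c @ [-1]) (tl \<sigma>))"
      using phi_gen_0[of \<sigma> p] c(1,2) J IH S by simp
    then show ?thesis using psi_U1[OF c(2)] c(1) by simp
  next
    fix a b assume ab: "p = 1 # a @ [-1] @ b @ [-1]" "dy a" "dy b" "length \<sigma> = length a + length b + 4"
      "mot (map uminus (rev a) @ [-1]) (rev (take (length a + 2) \<sigma>))"
      "mot (b @ [-1]) (drop (length a + 2) \<sigma>)"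
    define k where "k = length a + 2"
    have lk: "(LEAST k. 1 \<le> k \<and> psum p k = 0) = k" using least_k[OF ab(2), of "b @ [-1]"] ab(1) by (simp add: k_def)
    note S1 = std_mot[OF ab(5)] and S2 = std_mot[OF ab(6)]
    define s1 where "s1 = map (laminv (set (take k \<sigma>))) (rev (take k \<sigma>))"
    define s2 where "s2 = map (laminv (set (drop k \<sigma>))) (drop k \<sigma>)"
    have IH1: "phi (map uminus (rev a) @ [-1]) s1 = psi (map uminus (rev a) @ [-1]) s1"
      using less.hyps[of s1] S1 ab(4) by (simp add: s1_def k_def)
    have IH2: "phi (b @ [-1]) s2 = psi (b @ [-1]) s2"
      using less.hyps[of s2] S2 ab(4) by (simp add: s2_def k_def)
    have p1: "map uminus (rev (take (k - 1) p)) = map uminus (rev a) @ [-1]" "drop k p = b @ [-1]"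
      using ab(1) by (simp_all add: k_def)
    have "phi p \<sigma> = Node False (relabel (lam (set (take k \<sigma>))) (phi (map uminus (rev a) @ [-1]) s1))
      (relabel (lam (set (drop k \<sigma>))) (phi (b @ [-1]) s2))"
      using phi_gen1[OF _ _ lk] ab(1,4) p1 by (simp add: s1_def s2_def k_def)
    also have "\<dots> = Node False (psi (map uminus (rev a) @ [-1]) (rev (take k \<sigma>))) (psi (b @ [-1]) (drop k \<sigma>))"
      using IH1 IH2 S1 S2 by (simp add: s1_def s2_def k_def)
    also have "\<dots> = psi p \<sigma>" using psi_U2[OF ab(2,4)] ab(1) by (simp add: k_def)
    finally show ?thesis .
  qed
qed


lemma phi'_psi': "pp p \<sigma> \<Longrightarrow> set \<sigma> = {1..length \<sigma>} \<Longrightarrow> phi' p \<sigma> = psi' p \<sigma>"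
proof (induction "length \<sigma>" arbitrary: p \<sigma> rule: less_induct)
  case less
  note st = less.prems(2)
  from pp_cases[OF less.prems(1)] show ?case
  proof (elim disjE exE conjE)
    fix x assume s: "p = []" "\<sigma> = [x]"
    then show ?thesis by (simp add: phi'_gen0 psi'_V0)
  next
    fix c assume c: "p = 0 # c" "length \<sigma> = length c + 2" "pp c (tl \<sigma>)"
      "hd \<sigma> \<notin> set (tl \<sigma>)" "\<sigma> = hd \<sigma> # tl \<sigma>"
    have J: "{1..length \<sigma>} - {hd \<sigma>} = set (tl \<sigma>)" using st c(4,5) by (metis Diff_insert_absorb list.simps(15))
    note S = std_pp[OF c(3)]
    have IH: "phi' c (map (laminv (set (tl \<sigma>))) (tl \<sigma>)) = psi' c (map (laminv (set (tl \<sigma>))) (tl \<sigma>))"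
      using less.hyps[of "map (laminv (set (tl \<sigma>))) (tl \<sigma>)"] S c(2) by simp
    have "phi' p \<sigma> = Node False (Leaf False (hd \<sigma>)) (psi' c (tl \<sigma>))"
      using phi'_gen_0[of \<sigma> p] c(1,2) J IH S by simp
    then show ?thesis using psi'_V1[OF c(2)] c(1) by simp
  next
    fix a assume a: "p = 1 # a" "dy a" "length \<sigma> = length a + 2" "mot (map uminus (rev a) @ [-1]) (rev \<sigma>)"
    have g: "(GREATEST k. Pk p (length \<sigma>) k) = length \<sigma>" using greatest_A[OF a(2)] a(1,3) by simp
    have id: "map (laminv (set \<sigma>)) (rev \<sigma>) = rev \<sigma>"
    proof (intro map_idI)
      fix x assume "x \<in> set (rev \<sigma>)"
      then have "x \<in> {1..length \<sigma>}" using st by simp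
      then show "laminv (set \<sigma>) x = x" using st laminv_id by metis
    qed
    have "phi' p \<sigma> = mark_root (phi (map uminus (rev a) @ [-1]) (rev \<sigma>))"
      using phi'_gen2[OF _ _ g] a(1,3) id by simp
    also have "\<dots> = mark_root (psi (map uminus (rev a) @ [-1]) (rev \<sigma>))"
      using phi_psi[OF a(4)] st by simp
    also have "\<dots> = psi' p \<sigma>" using psi'_V2[OF a(2,3)] a(1) by simp
    finally show ?thesis .
  next
    fix a d w assume a: "p = 1 # a @ [d] @ w" "dy a" "d \<in> {-1,1}" "pos 0 w"
      "length \<sigma> = length a + length w + 3"
      "mot (map uminus (rev a) @ [-1]) (rev (take (length a + 2) \<sigma>))"
      "pp w (drop (length a + 2) \<sigma>)"
    define k where "k = length a + 2"
    have g: "(GREATEST k. Pk p (length \<sigma>) k) = k" using greatest_BC[OF a(2-4)] a(1,5) by (simp add: k_def)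
    note S1 = std_mot[OF a(6)] and S2 = std_pp[OF a(7)]
    define s1 where "s1 = map (laminv (set (take k \<sigma>))) (rev (take k \<sigma>))"
    define s2 where "s2 = map (laminv (set (drop k \<sigma>))) (drop k \<sigma>)"
    have IH1: "phi (map uminus (rev a) @ [-1]) s1 = psi (map uminus (rev a) @ [-1]) s1"
      using phi_psi[of _ s1] S1 by (simp add: s1_def k_def)
    have IH2: "phi' w s2 = psi' w s2"
      using less.hyps[of s2] S2 a(5) by (simp add: s2_def k_def)
    have p1: "map uminus (rev (take (k - 1) p)) = map uminus (rev a) @ [-1]" "drop k p = w"
      using a(1) by (simp_all add: k_def)
    have "phi' p \<sigma> = Node False (relabel (lam (set (take k \<sigma>))) (phi (map uminus (rev a) @ [-1]) s1))
      (relabel (lam (set (drop k \<sigma>))) (phi' w s2))"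
      using phi'_gen3[OF _ _ g] a(1,5) p1 by (simp add: s1_def s2_def k_def)
    also have "\<dots> = Node False (psi (map uminus (rev a) @ [-1]) (rev (take k \<sigma>))) (psi' w (drop k \<sigma>))"
      using IH1 IH2 S1 S2 by (simp add: s1_def s2_def k_def)
    also have "\<dots> = psi' p \<sigma>" using psi'_V3[OF a(2-5)] a(1) by (simp add: k_def)
    finally show ?thesis .
  qed
qed

lemma wl_nth: "wl p s \<longleftrightarrow> (1 \<le> length s \<and> length p = length s - 1 \<and> set p \<subseteq> {-1,0,1} \<and>
   (\<forall>i < length p. (p ! i = -1 \<longrightarrow> s ! i < s ! (i+1)) \<and> (p ! i = 1 \<longrightarrow> s ! i > s ! (i+1))))"
proof (induction p s rule: wl.induct)
  case (2 d p x y s)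
  show ?case using 2 by (auto simp: All_less_Suc2)
qed auto

lemma positive_path_pp: "1 \<le> n \<Longrightarrow> positive_path n p \<sigma> \<longleftrightarrow> pp p \<sigma> \<and> set \<sigma> = {1..n}"
proof
  assume n: "1 \<le> n" and P: "positive_path n p \<sigma>"
  then have "wl p \<sigma>" by (auto simp: positive_path_def well_labelled_def wl_nth)
  moreover have "pos 0 p" using P pos_iff[of 0 p] by (auto simp: positive_path_def well_labelled_def)
  ultimately show "pp p \<sigma> \<and> set \<sigma> = {1..n}" using P by (auto simp: pp_def positive_path_def well_labelled_def)
next
  assume n: "1 \<le> n" and P: "pp p \<sigma> \<and> set \<sigma> = {1..n}"
  then have len: "length \<sigma> = n" using distinct_card[of \<sigma>] by (auto simp: pp_def)
  have w: "wl p \<sigma>" and d: "distinct \<sigma>" and ps: "pos 0 p" using P by (auto simp: pp_def)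
  have "well_labelled n p \<sigma>" using w d P len unfolding well_labelled_def wl_nth by auto
  moreover have "\<forall>j\<in>{1..n - 1}. 0 \<le> psum p j" using ps pos_iff[of 0 p] w len wl_len by fastforce
  ultimately show "positive_path n p \<sigma>" by (simp add: positive_path_def)
qed

theorem theorem2:
  fixes n :: nat
  assumes "n \<ge> 1"
  shows "bij_betw (\<lambda>(p, \<sigma>). tree_class (phi' p \<sigma>))
           {(p, \<sigma>). positive_path n p \<sigma>} (marked_trees n)"
  unfolding bij_betw_def
proof (intro conjI)
  have conv: "positive_path n p \<sigma> \<Longrightarrow> pp p \<sigma> \<and> set \<sigma> = {1..n} \<and> phi' p \<sigma> = psi' p \<sigma>" for p \<sigma>
  proof -
    assume "positive_path n p \<sigma>"
    then have P: "pp p \<sigma>" "set \<sigma> = {1..n}" using positive_path_pp[OF assms] by auto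
    then have "length \<sigma> = n" using distinct_card[of \<sigma>] by (auto simp: pp_def)
    then show ?thesis using P phi'_psi' by simp
  qed
  show "inj_on (\<lambda>(p, \<sigma>). tree_class (phi' p \<sigma>)) {(p, \<sigma>). positive_path n p \<sigma>}"
  proof (rule inj_onI, clarify)
    fix p \<sigma> q \<tau>
    assume a: "positive_path n p \<sigma>" "positive_path n q \<tau>" "tree_class (phi' p \<sigma>) = tree_class (phi' q \<tau>)"
    have "phi' q \<tau> \<in> tree_class (phi' p \<sigma>)" by (subst a(3)) (simp add: tree_class_def te_refl)
    then have "tree_eq (phi' p \<sigma>) (phi' q \<tau>)" by (simp add: tree_class_def)
    then have "tree_eq (psi' p \<sigma>) (psi' q \<tau>)" using conv[OF a(1)] conv[OF a(2)] by simp
    then show "p = q \<and> \<sigma> = \<tau>" using psi'_inj conv[OF a(1)] conv[OF a(2)] by blast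
  qed
  show "(\<lambda>(p, \<sigma>). tree_class (phi' p \<sigma>)) ` {(p, \<sigma>). positive_path n p \<sigma>} = marked_trees n"
  proof
    show "(\<lambda>(p, \<sigma>). tree_class (phi' p \<sigma>)) ` {(p, \<sigma>). positive_path n p \<sigma>} \<subseteq> marked_trees n"
    proof clarify
      fix p \<sigma> assume a: "positive_path n p \<sigma>"
      note C = conv[OF a]
      have "marked_labelled_tree n (psi' p \<sigma>)"
        using psi'_distinct[of p \<sigma>] psi'_props[of p \<sigma>] C
        by (simp add: marked_labelled_tree_def labelled_tree_def)
      then show "tree_class (phi' p \<sigma>) \<in> marked_trees n" using C by (auto simp: marked_trees_def)
    qed
  next
    show "marked_trees n \<subseteq> (\<lambda>(p, \<sigma>). tree_class (phi' p \<sigma>)) ` {(p, \<sigma>). positive_path n p \<sigma>}"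
    proof
      fix X assume "X \<in> marked_trees n"
      then obtain t where t: "X = tree_class t" "marked_labelled_tree n t" by (auto simp: marked_trees_def)
      have "nmarks t = 1" "distinct (leaves t)" "set (leaves t) = {1..n}"
        using t(2) by (auto simp: marked_labelled_tree_def labelled_tree_def)
      then obtain p \<sigma> where P: "pp p \<sigma>" "tree_eq (psi' p \<sigma>) t" using psi'_surj by blast
      have s: "set \<sigma> = {1..n}" using pp_leaves[OF P] \<open>set (leaves t) = {1..n}\<close> by simp
      then have pp: "positive_path n p \<sigma>" using positive_path_pp[OF assms] P(1) by simp
      have "tree_class (phi' p \<sigma>) = X" using conv[OF pp] tree_class_eq[OF P(2)] t(1) by simp
      then show "X \<in> (\<lambda>(p, \<sigma>). tree_class (phi' p \<sigma>)) ` {(p, \<sigma>). positive_path n p \<sigma>}"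
        using pp by force
    qed
  qed
qed

end
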